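(* Let $G$ be a finite simple graph and $\Bbbk$ a field. Then $$\operatorname{reg}_{\Bbbk}(G)=\max\Big\{\sum_{i=1}^{r}\operatorname{reg}_{\Bbbk}(H_i)\;:\;\{H_1,\dots,H_r\}\text{ a prime decomposition of }G\text{ over }\Bbbk\Big\},$$ where the empty family ($r=0$, empty sum $0$) is allowed.
   Context: All graphs are finite and simple. For a graph $G$, $\operatorname{Ind}(G)$ is its independence complex (faces are the independent vertex sets), and $G[S]$ is the induced subgraph on $S\subseteq V(G)$. The regularity of $G$ over a field $\Bbbk$ is $\operatorname{reg}_{\Bbbk}(G)=\max\{j\ge 0:\widetilde H_{j-1}(\operatorname{Ind}(G[S]);\Bbbk)\neq 0\text{ for some }S\subseteq V(G)\}$, where $\operatorname{Ind}$ of the graph on the empty vertex set is $\{\emptyset\}$ with $\widetilde H_{-1}=\Bbbk$; equivalently $\operatorname{reg}_{\Bbbk}(G)=\operatorname{reg}(R/I(G))$ for the edge ideal $I(G)$. A connected graph $H$ is a prime graph over $\Bbbk$ if $\operatorname{reg}_{\Bbbk}(H-x)<\operatorname{reg}_{\Bbbk}(H)$ for every vertex $x$ of $H$. A prime decomposition of $G$ over $\Bbbk$ is a family $\{H_1,\dots,H_r\}$ of pairwise vertex-disjoint induced subgraphs of $G$, each a prime graph over $\Bbbk$, such that $G$ has no edge joining vertices of two different $H_i$ (i.e. $G[\bigcup_i V(H_i)]$ is the disjoint union of the $H_i$). *)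

theory Defs
  imports Main
begin

text \<open>A graph is given by a finite vertex set V and a symmetric irreflexive
edge relation E. Induced subgraphs G[S] are represented by their vertex set S.\<close>

definition ind_face :: "('a \<Rightarrow> 'a \<Rightarrow> bool) \<Rightarrow> 'a set \<Rightarrow> 'a set \<Rightarrow> bool" where
  "ind_face E S F \<longleftrightarrow> F \<subseteq> S \<and> (\<forall>u\<in>F. \<forall>v\<in>F. \<not> E u v)"

text \<open>Simplicial chains of Ind(G[S]) over the field 'k with j vertices per face
(i.e. of dimension j-1; j = 0 is the empty face, giving the augmented complex).\<close>
definition is_chain :: "('a \<Rightarrow> 'a \<Rightarrow> bool) \<Rightarrow> 'a set \<Rightarrow> nat \<Rightarrow> ('a set \<Rightarrow> 'k::field) \<Rightarrow> bool" where
  "is_chain E S j c \<longleftrightarrow> (\<forall>F. c F \<noteq> 0 \<longrightarrow> ind_face E S F \<and> card F = j)"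

text \<open>Simplicial boundary map with respect to the linear order on vertices:
the coefficient of tau in the boundary of sigma = insert v tau is (-1)^i,
where i is the position of v in sigma.\<close>
definition bd :: "'a::linorder set \<Rightarrow> ('a set \<Rightarrow> 'k::field) \<Rightarrow> 'a set \<Rightarrow> 'k" where
  "bd S c \<tau> = (\<Sum>v\<in>S - \<tau>. (-1) ^ card {u\<in>\<tau>. u < v} * c (insert v \<tau>))"

text \<open>Reduced homology of Ind(G[S]) in degree j-1 over 'k is nonzero.\<close>
definition hom_nz :: "'k::field itself \<Rightarrow> ('a::linorder \<Rightarrow> 'a \<Rightarrow> bool) \<Rightarrow> 'a set \<Rightarrow> nat \<Rightarrow> bool" where
  "hom_nz K E S j \<longleftrightarrow>
     (\<exists>z :: 'a set \<Rightarrow> 'k. is_chain E S j z \<and> (\<forall>\<tau>. bd S z \<tau> = 0) \<and>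
        \<not> (\<exists>c :: 'a set \<Rightarrow> 'k. is_chain E S (Suc j) c \<and> (\<forall>\<tau>. bd S c \<tau> = z \<tau>)))"

definition reg :: "'k::field itself \<Rightarrow> ('a::linorder \<Rightarrow> 'a \<Rightarrow> bool) \<Rightarrow> 'a set \<Rightarrow> nat" where
  "reg K E V = Max {j. \<exists>S\<subseteq>V. hom_nz K E S j}"

definition connected_graph :: "('a \<Rightarrow> 'a \<Rightarrow> bool) \<Rightarrow> 'a set \<Rightarrow> bool" where
  "connected_graph E W \<longleftrightarrow> W \<noteq> {} \<and>
     (\<forall>u\<in>W. \<forall>v\<in>W. (\<lambda>x y. x \<in> W \<and> y \<in> W \<and> E x y)\<^sup>*\<^sup>* u v)"

definition prime_graph :: "'k::field itself \<Rightarrow> ('a::linorder \<Rightarrow> 'a \<Rightarrow> bool) \<Rightarrow> 'a set \<Rightarrow> bool" where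
  "prime_graph K E W \<longleftrightarrow> connected_graph E W \<and>
     (\<forall>x\<in>W. reg K E (W - {x}) < reg K E W)"

definition prime_decomp :: "'k::field itself \<Rightarrow> ('a::linorder \<Rightarrow> 'a \<Rightarrow> bool) \<Rightarrow> 'a set \<Rightarrow> 'a set set \<Rightarrow> bool" where
  "prime_decomp K E V \<H> \<longleftrightarrow>
     (\<forall>W\<in>\<H>. W \<subseteq> V \<and> prime_graph K E W) \<and>
     (\<forall>W1\<in>\<H>. \<forall>W2\<in>\<H>. W1 \<noteq> W2 \<longrightarrow> W1 \<inter> W2 = {} \<and>
        (\<forall>u\<in>W1. \<forall>v\<in>W2. \<not> E u v))"

end

theory Submission
  imports Defs
begin


lemma bd_add: "bd S (\<lambda>F. c1 F + c2 F) \<tau> = bd S c1 \<tau> + bd S c2 \<tau>"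
  by (simp add: bd_def sum.distrib algebra_simps)

lemma bd_diff: "bd S (\<lambda>F. c1 F - c2 F) \<tau> = bd S c1 \<tau> - bd S c2 \<tau>"
  by (simp add: bd_def sum_subtractf algebra_simps)

lemma bd_scale: "bd S (\<lambda>F. a * c F) \<tau> = a * bd S c \<tau>"
  by (simp add: bd_def sum_distrib_left algebra_simps)

lemma bd_zero: "bd S (\<lambda>F. 0) \<tau> = 0"
  by (simp add: bd_def)

lemma bd_sum: "bd S (\<lambda>F. \<Sum>i\<in>I. f i F) \<tau> = (\<Sum>i\<in>I. bd S (f i) \<tau>)"
  by (simp add: bd_def sum_distrib_left sum.swap[of _ I])

lemma bd_nz: "bd S c \<tau> \<noteq> 0 \<Longrightarrow> \<exists>v\<in>S - \<tau>. c (insert v \<tau>) \<noteq> 0"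
  unfolding bd_def by (metis (no_types, lifting) mult_zero_right sum.neutral)

lemma bd_chain: assumes "is_chain E S (Suc j) c" shows "is_chain E S j (bd S c)"
  unfolding is_chain_def
proof (intro allI impI)
  fix F assume "bd S c F \<noteq> 0"
  then obtain v where v: "v \<in> S - F" "c (insert v F) \<noteq> 0" using bd_nz by blast
  with assms have "ind_face E S (insert v F)" "card (insert v F) = Suc j"
    unfolding is_chain_def by auto
  moreover have "finite (insert v F)" using \<open>card (insert v F) = Suc j\<close> by (metis card.infinite nat.distinct(1))
  ultimately show "ind_face E S F \<and> card F = j" using v unfolding ind_face_def by auto
qed



lemma card_less_insert:
  assumes "finite \<tau>" "v \<notin> \<tau>"
  shows "card {x\<in>insert v \<tau>. x < u} = card {x\<in>\<tau>. x < u} + (if v < u then 1 else 0)"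
proof -
  have "{x\<in>insert v \<tau>. x < u} = (if v < u then insert v {x\<in>\<tau>. x < u} else {x\<in>\<tau>. x < u})"
    by auto
  then show ?thesis using assms by auto
qed

lemma bd_bd:
  fixes c :: "'a::linorder set \<Rightarrow> 'k::field"
  assumes "finite S" "finite \<tau>"
  shows "bd S (bd S c) \<tau> = 0"
proof -
  define T where "T = S - \<tau>"
  define s where "s = (\<lambda>v. (-1::'k) ^ card {u\<in>\<tau>. u < v})"
  define h where "h = (\<lambda>v u. s v * s u * (if v < u then -1 else 1) * c (insert u (insert v \<tau>)))"
  have fT: "finite T" using assms T_def by auto
  have eq1: "bd S (bd S c) \<tau> = (\<Sum>v\<in>T. \<Sum>u\<in>T - {v}. h v u)"
    unfolding bd_def T_def
  proof (rule sum.cong[OF refl])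
    fix v assume v: "v \<in> S - \<tau>"
    have ee: "S - insert v \<tau> = S - \<tau> - {v}" by blast
    have "(-1::'k) ^ card {u\<in>\<tau>. u < v} * (\<Sum>va\<in>S - insert v \<tau>. (-1) ^ card {u\<in>insert v \<tau>. u < va} * c (insert va (insert v \<tau>)))
        = (\<Sum>u\<in>S - \<tau> - {v}. s v * ((-1) ^ card {x\<in>insert v \<tau>. x < u} * c (insert u (insert v \<tau>))))"
      unfolding ee s_def sum_distrib_left by (rule refl)
    also have "\<dots> = (\<Sum>u\<in>S - \<tau> - {v}. h v u)"
    proof (rule sum.cong[OF refl])
      fix u assume u: "u \<in> S - \<tau> - {v}"
      have "card {x\<in>insert v \<tau>. x < u} = card {x\<in>\<tau>. x < u} + (if v < u then 1 else 0)"
        using card_less_insert[OF assms(2)] v by blast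
      then show "s v * ((-1) ^ card {x\<in>insert v \<tau>. x < u} * c (insert u (insert v \<tau>))) = h v u"
        by (simp add: h_def s_def power_add)
    qed
    finally show "(-1::'k) ^ card {u\<in>\<tau>. u < v} * (\<Sum>va\<in>S - insert v \<tau>. (-1) ^ card {u\<in>insert v \<tau>. u < va} * c (insert va (insert v \<tau>)))
        = (\<Sum>u\<in>S - \<tau> - {v}. h v u)" .
  qed
  have split: "\<And>v. (\<Sum>u\<in>T - {v}. h v u) = (\<Sum>u\<in>{u\<in>T. v < u}. h v u) + (\<Sum>u\<in>{u\<in>T. u < v}. h v u)"
  proof -
    fix v
    have e: "T - {v} = {u\<in>T. v < u} \<union> {u\<in>T. u < v}" by auto
    have d: "{u\<in>T. v < u} \<inter> {u\<in>T. u < v} = {}" by auto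
    show "(\<Sum>u\<in>T - {v}. h v u) = (\<Sum>u\<in>{u\<in>T. v < u}. h v u) + (\<Sum>u\<in>{u\<in>T. u < v}. h v u)"
      unfolding e by (rule sum.union_disjoint) (use fT d in auto)
  qed
  have swap: "(\<Sum>v\<in>T. \<Sum>u\<in>{u\<in>T. u < v}. h v u) = (\<Sum>u\<in>T. \<Sum>v\<in>{v\<in>T. u < v}. h v u)"
    using sum.swap_restrict[OF fT fT, of "\<lambda>v u. h v u" "\<lambda>v u. u < v"] by simp
  have anti: "h u v = - h v u" if vu: "v < u" for v u
  proof -
    have "\<not> u < v" using vu by simp
    then show ?thesis unfolding h_def using vu by (simp add: insert_commute)
  qed
  have "bd S (bd S c) \<tau> = (\<Sum>v\<in>T. \<Sum>u\<in>{u\<in>T. v < u}. h v u) + (\<Sum>v\<in>T. \<Sum>u\<in>{u\<in>T. u < v}. h v u)"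
    using eq1 split by (simp add: sum.distrib)
  also have "\<dots> = (\<Sum>v\<in>T. \<Sum>u\<in>{u\<in>T. v < u}. h v u) + (\<Sum>v\<in>T. \<Sum>u\<in>{u\<in>T. v < u}. h u v)"
    using swap by simp
  also have "\<dots> = (\<Sum>v\<in>T. \<Sum>u\<in>{u\<in>T. v < u}. h v u + h u v)"
    by (simp add: sum.distrib)
  also have "\<dots> = 0" using anti by (simp add: sum.neutral)
  finally show ?thesis .
qed



lemma sep:
  fixes U :: "('x \<Rightarrow> 'k::field) set"
  assumes "finite D"
    and "\<forall>u\<in>U. \<forall>d. d \<notin> D \<longrightarrow> u d = 0"
    and "\<forall>u\<in>U. \<forall>v\<in>U. (\<lambda>d. u d + v d) \<in> U"
    and "\<forall>u\<in>U. \<forall>a. (\<lambda>d. a * u d) \<in> U"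
    and "(\<lambda>d. 0) \<in> U"
    and "\<forall>d. d \<notin> D \<longrightarrow> z d = 0" and "z \<notin> U"
  shows "\<exists>f. (\<forall>u\<in>U. (\<Sum>d\<in>D. f d * u d) = 0) \<and> (\<Sum>d\<in>D. f d * z d) = 1"
  using assms
proof (induction D arbitrary: U z rule: finite_induct)
  case empty
  then have "z = (\<lambda>d. 0)" by auto
  with empty show ?case by auto
next
  case (insert d0 D)
  show ?case
  proof (cases "\<exists>b\<in>U. b d0 \<noteq> 0")
    case True
    then obtain b where b: "b \<in> U" "b d0 \<noteq> 0" by blast
    define b0 where "b0 = (\<lambda>d. inverse (b d0) * b d)"
    have b0U: "b0 \<in> U" using insert.prems(3) b unfolding b0_def by blast
    have b01: "b0 d0 = 1" using b unfolding b0_def by simp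
    have negU: "(\<lambda>d. - u d) \<in> U" if u: "u \<in> U" for u
    proof -
      have "(\<lambda>d. (-1) * u d) \<in> U" using insert.prems(3) u by blast
      then show ?thesis by simp
    qed
    define U' where "U' = {u\<in>U. u d0 = 0}"
    define z' where "z' = (\<lambda>d. z d - z d0 * b0 d)"
    have proj: "\<And>u. u \<in> U \<Longrightarrow> (\<lambda>d. u d - u d0 * b0 d) \<in> U'"
    proof -
      fix u assume u: "u \<in> U"
      have m: "(\<lambda>d. - (u d0 * b0 d)) \<in> U" using negU insert.prems(3) b0U by blast
      have "(\<lambda>d. u d + - (u d0 * b0 d)) \<in> U" using bspec[OF bspec[OF insert.prems(2) u] m] by simp
      then show "(\<lambda>d. u d - u d0 * b0 d) \<in> U'" unfolding U'_def using b01 by simp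
    qed
    have "\<exists>f. (\<forall>u\<in>U'. (\<Sum>d\<in>D. f d * u d) = 0) \<and> (\<Sum>d\<in>D. f d * z' d) = 1"
    proof (rule insert.IH)
      show "\<forall>u\<in>U'. \<forall>d. d \<notin> D \<longrightarrow> u d = 0" using insert.prems(1) unfolding U'_def by auto
      show "\<forall>u\<in>U'. \<forall>v\<in>U'. (\<lambda>d. u d + v d) \<in> U'" using insert.prems(2) unfolding U'_def by auto
      show "\<forall>u\<in>U'. \<forall>a. (\<lambda>d. a * u d) \<in> U'" using insert.prems(3) unfolding U'_def by auto
      show "(\<lambda>d. 0) \<in> U'" using insert.prems(4) unfolding U'_def by auto
      show "\<forall>d. d \<notin> D \<longrightarrow> z' d = 0"
      proof (intro allI impI)
        fix d assume d: "d \<notin> D"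
        show "z' d = 0"
        proof (cases "d = d0")
          case True then show ?thesis using b01 unfolding z'_def by simp
        next
          case False
          then have "z d = 0" "b0 d = 0" using d insert.prems(5) insert.prems(1) b0U by auto
          then show ?thesis unfolding z'_def by simp
        qed
      qed
      show "z' \<notin> U'"
      proof
        assume "z' \<in> U'"
        then have m1: "z' \<in> U" unfolding U'_def by auto
        have m2: "(\<lambda>d. z d0 * b0 d) \<in> U" using insert.prems(3) b0U by blast
        have "(\<lambda>d. z' d + z d0 * b0 d) \<in> U" using bspec[OF bspec[OF insert.prems(2) m1] m2] by simp
        then show False using insert.prems(6) unfolding z'_def by simp
      qed
    qed
    then obtain f' where f': "\<forall>u\<in>U'. (\<Sum>d\<in>D. f' d * u d) = 0" "(\<Sum>d\<in>D. f' d * z' d) = 1" by blast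
    define \<beta> where "\<beta> = (\<Sum>d\<in>D. f' d * b0 d)"
    define f where "f = f'(d0 := - \<beta>)"
    have key: "\<And>u. (\<Sum>d\<in>insert d0 D. f d * u d) = - \<beta> * u d0 + (\<Sum>d\<in>D. f' d * u d)"
    proof -
      fix u :: "'x \<Rightarrow> 'k"
      have "(\<Sum>d\<in>D. f d * u d) = (\<Sum>d\<in>D. f' d * u d)"
        using insert.hyps(2) by (intro sum.cong) (auto simp: f_def)
      then show "(\<Sum>d\<in>insert d0 D. f d * u d) = - \<beta> * u d0 + (\<Sum>d\<in>D. f' d * u d)"
        using insert.hyps by (simp add: f_def)
    qed
    have lin: "\<And>u. (\<Sum>d\<in>D. f' d * (u d - u d0 * b0 d)) = (\<Sum>d\<in>D. f' d * u d) - u d0 * \<beta>"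
      by (simp add: \<beta>_def right_diff_distrib sum_subtractf sum_distrib_left algebra_simps)
    show ?thesis
    proof (intro exI conjI ballI)
      fix u assume u: "u \<in> U"
      have "(\<Sum>d\<in>D. f' d * (u d - u d0 * b0 d)) = 0" using bspec[OF f'(1) proj[OF u]] by simp
      then show "(\<Sum>d\<in>insert d0 D. f d * u d) = 0" using key[of u] lin[of u] by (simp add: algebra_simps)
    next
      have "(\<Sum>d\<in>D. f' d * (z d - z d0 * b0 d)) = 1" using f'(2) unfolding z'_def by simp
      then have h1: "(\<Sum>d\<in>D. f' d * z d) = 1 + z d0 * \<beta>" using lin[of z] by (simp add: algebra_simps)
      show "(\<Sum>d\<in>insert d0 D. f d * z d) = 1" unfolding key[of z] h1 by (simp add: algebra_simps)
    qed
  next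
    case False
    then have U0: "\<forall>u\<in>U. u d0 = 0" by blast
    show ?thesis
    proof (cases "z d0 = 0")
      case False
      define f where "f = (\<lambda>d. if d = d0 then inverse (z d0) else 0)"
      have "(\<Sum>d\<in>insert d0 D. f d * u d) = inverse (z d0) * u d0" for u
      proof -
        have "(\<Sum>d\<in>D. f d * u d) = 0" using insert.hyps(2) by (intro sum.neutral) (auto simp: f_def)
        then show ?thesis using insert.hyps by (simp add: f_def)
      qed
      then show ?thesis using U0 False by (intro exI[of _ f]) auto
    next
      case True
      have "\<exists>f. (\<forall>u\<in>U. (\<Sum>d\<in>D. f d * u d) = 0) \<and> (\<Sum>d\<in>D. f d * z d) = 1"
      proof (rule insert.IH)
        show "\<forall>u\<in>U. \<forall>d. d \<notin> D \<longrightarrow> u d = 0" using insert.prems(1) U0 by (metis insert_iff)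
        show "\<forall>d. d \<notin> D \<longrightarrow> z d = 0" using insert.prems(5) True by (metis insert_iff)
      qed (use insert.prems in auto)
      then obtain f where f: "\<forall>u\<in>U. (\<Sum>d\<in>D. f d * u d) = 0" "(\<Sum>d\<in>D. f d * z d) = 1" by blast
      have "\<And>u. u d0 = 0 \<Longrightarrow> (\<Sum>d\<in>insert d0 D. f d * u d) = (\<Sum>d\<in>D. f d * u d)"
        using insert.hyps by simp
      then show ?thesis using f U0 True by (intro exI[of _ f]) auto
    qed
  qed
qed



definition Dop :: "'a::linorder set \<Rightarrow> 'a set \<Rightarrow> ('a set \<Rightarrow> 'a set \<Rightarrow> 'k::field) \<Rightarrow> 'a set \<Rightarrow> 'a set \<Rightarrow> 'k" where
  "Dop A B c F G = bd A (\<lambda>F'. c F' G) F + (-1) ^ card F * bd B (c F) G"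

definition bichain :: "('a \<Rightarrow> 'a \<Rightarrow> bool) \<Rightarrow> 'a set \<Rightarrow> 'a set \<Rightarrow> nat \<Rightarrow> ('a set \<Rightarrow> 'a set \<Rightarrow> 'k::field) \<Rightarrow> bool" where
  "bichain E A B n c \<longleftrightarrow> (\<forall>F G. c F G \<noteq> 0 \<longrightarrow> ind_face E A F \<and> ind_face E B G \<and> card F + card G = n)"

lemma Dop_diff: "Dop A B (\<lambda>F G. c1 F G - c2 F G) F G = Dop A B c1 F G - Dop A B c2 F G"
  unfolding Dop_def by (simp add: bd_diff algebra_simps)

lemma Dop_add: "Dop A B (\<lambda>F G. c1 F G + c2 F G) F G = Dop A B c1 F G + Dop A B c2 F G"
  unfolding Dop_def by (simp add: bd_add algebra_simps)

lemma Dop_zero: "Dop A B (\<lambda>F G. 0) F G = 0"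
  unfolding Dop_def by (simp add: bd_zero)

lemma bd_inf:
  assumes "\<forall>X. infinite X \<longrightarrow> c X = 0" "infinite \<tau>"
  shows "bd S c \<tau> = 0"
  unfolding bd_def using assms by (intro sum.neutral) auto

lemma Dop_inf:
  assumes "\<forall>F G. c F G \<noteq> 0 \<longrightarrow> finite F \<and> finite G" "infinite F \<or> infinite G"
  shows "Dop A B c F G = 0"
proof -
  have 1: "bd A (\<lambda>F'. c F' G) F = 0"
    unfolding bd_def using assms by (intro sum.neutral ballI) (metis finite_insert mult_zero_right)
  have 2: "bd B (c F) G = 0"
    unfolding bd_def using assms by (intro sum.neutral ballI) (metis finite_insert mult_zero_right)
  show ?thesis unfolding Dop_def 1 2 by simp
qed

lemma neg1_sq: "(-1::'k::field) ^ n * (-1) ^ n = 1"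
  by (simp add: power_mult_distrib[symmetric])

lemma Dop_Dop_fin:
  fixes c :: "'a::linorder set \<Rightarrow> 'a set \<Rightarrow> 'k::field"
  assumes "finite A" "finite B" "finite F" "finite G"
  shows "Dop A B (Dop A B c) F G = 0"
proof -
  define Y where "Y = (\<Sum>v\<in>A - F. (-1::'k) ^ card {u\<in>F. u < v} * bd B (c (insert v F)) G)"
  have a1: "bd A (\<lambda>F'. Dop A B c F' G) F
      = bd A (\<lambda>F'. bd A (\<lambda>F''. c F'' G) F') F + bd A (\<lambda>F'. (-1) ^ card F' * bd B (c F') G) F"
    unfolding Dop_def by (rule bd_add)
  have a2: "bd A (\<lambda>F'. bd A (\<lambda>F''. c F'' G) F') F = 0" by (rule bd_bd[OF assms(1) assms(3)])
  have a3: "bd A (\<lambda>F'. (-1) ^ card F' * bd B (c F') G) F = - ((-1) ^ card F) * Y"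
  proof -
    have "bd A (\<lambda>F'. (-1) ^ card F' * bd B (c F') G) F
        = (\<Sum>v\<in>A - F. (-1) ^ card {u\<in>F. u < v} * ((-1) ^ card (insert v F) * bd B (c (insert v F)) G))"
      unfolding bd_def by simp
    also have "\<dots> = (\<Sum>v\<in>A - F. - ((-1) ^ card F) * ((-1::'k) ^ card {u\<in>F. u < v} * bd B (c (insert v F)) G))"
      using assms(3) by (intro sum.cong) auto
    also have "\<dots> = - ((-1) ^ card F) * Y" unfolding Y_def by (simp add: sum_distrib_left)
    finally show ?thesis .
  qed
  have b1: "bd B (Dop A B c F) G = bd B (\<lambda>G'. bd A (\<lambda>F'. c F' G') F) G + bd B (\<lambda>G'. (-1) ^ card F * bd B (c F) G') G"
    unfolding Dop_def by (rule bd_add)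
  have b2: "bd B (\<lambda>G'. (-1) ^ card F * bd B (c F) G') G = 0"
    using bd_bd[OF assms(2) assms(4)] by (simp add: bd_scale)
  have b3: "bd B (\<lambda>G'. bd A (\<lambda>F'. c F' G') F) G = Y"
    unfolding Y_def bd_def by (simp add: sum_distrib_left sum.swap[of _ "B - G"] algebra_simps)
  show ?thesis
    unfolding Dop_def[of A B "Dop A B c" F G] a1 a2 a3 b1 b2 b3 by (simp add: algebra_simps)
qed

lemma Dop_Dop:
  fixes c :: "'a::linorder set \<Rightarrow> 'a set \<Rightarrow> 'k::field"
  assumes "finite A" "finite B" "\<forall>F G. c F G \<noteq> 0 \<longrightarrow> finite F \<and> finite G"
  shows "Dop A B (Dop A B c) F G = 0"
proof (cases "finite F \<and> finite G")
  case True then show ?thesis using Dop_Dop_fin assms by blast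
next
  case False
  have "\<forall>F G. Dop A B c F G \<noteq> 0 \<longrightarrow> finite F \<and> finite G" using Dop_inf[OF assms(3)] by blast
  then show ?thesis using Dop_inf False by blast
qed

lemma bichain_fin: "bichain E A B n c \<Longrightarrow> finite A \<Longrightarrow> finite B \<Longrightarrow> \<forall>F G. c F G \<noteq> 0 \<longrightarrow> finite F \<and> finite G"
  unfolding bichain_def ind_face_def by (meson finite_subset)

lemma Dop_bichain:
  assumes "bichain E A B (Suc n) c" "finite A" "finite B"
  shows "bichain E A B n (Dop A B c)"
  unfolding bichain_def
proof (intro allI impI)
  fix F G assume nz: "Dop A B c F G \<noteq> 0"
  then have "bd A (\<lambda>F'. c F' G) F \<noteq> 0 \<or> bd B (c F) G \<noteq> 0" unfolding Dop_def by auto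
  then show "ind_face E A F \<and> ind_face E B G \<and> card F + card G = n"
  proof
    assume "bd A (\<lambda>F'. c F' G) F \<noteq> 0"
    then obtain v where v: "v \<in> A - F" "c (insert v F) G \<noteq> 0" using bd_nz by blast
    then have h: "ind_face E A (insert v F)" "ind_face E B G" "card (insert v F) + card G = Suc n"
      using assms(1) unfolding bichain_def by auto
    have "finite F" using h(1) assms(2) unfolding ind_face_def by (meson finite_subset subset_insertI2 subset_refl)
    then show ?thesis using h v unfolding ind_face_def by auto
  next
    assume "bd B (c F) G \<noteq> 0"
    then obtain v where v: "v \<in> B - G" "c F (insert v G) \<noteq> 0" using bd_nz by blast
    then have h: "ind_face E A F" "ind_face E B (insert v G)" "card F + card (insert v G) = Suc n"
      using assms(1) unfolding bichain_def by auto
    have "finite G" using h(2) assms(3) unfolding ind_face_def by (meson finite_subset subset_insertI2 subset_refl)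
    then show ?thesis using h v unfolding ind_face_def by auto
  qed
qed



definition npairs :: "'a::linorder set \<Rightarrow> 'a set \<Rightarrow> nat" where
  "npairs F G = card {(u,v). u \<in> F \<and> v \<in> G \<and> v < u}"

definition fromS :: "'a::linorder set \<Rightarrow> 'a set \<Rightarrow> ('a set \<Rightarrow> 'k::field) \<Rightarrow> 'a set \<Rightarrow> 'a set \<Rightarrow> 'k" where
  "fromS A B c F G = (if F \<subseteq> A \<and> G \<subseteq> B then (-1) ^ npairs F G * c (F \<union> G) else 0)"

definition toS :: "'a::linorder set \<Rightarrow> 'a set \<Rightarrow> ('a set \<Rightarrow> 'a set \<Rightarrow> 'k::field) \<Rightarrow> 'a set \<Rightarrow> 'k" where
  "toS A B c X = (if X \<subseteq> A \<union> B then (-1) ^ npairs (X \<inter> A) (X \<inter> B) * c (X \<inter> A) (X \<inter> B) else 0)"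

lemma np_insL:
  assumes "finite F" "finite G" "v \<notin> F"
  shows "npairs (insert v F) G = npairs F G + card {w\<in>G. w < v}"
proof -
  have e: "{(u,w). u \<in> insert v F \<and> w \<in> G \<and> w < u} = {(u,w). u \<in> F \<and> w \<in> G \<and> w < u} \<union> (\<lambda>w. (v,w)) ` {w\<in>G. w < v}"
    by auto
  have f1: "finite {(u,w). u \<in> F \<and> w \<in> G \<and> w < u}"
    by (rule finite_subset[of _ "F \<times> G"]) (use assms in auto)
  have d: "{(u,w). u \<in> F \<and> w \<in> G \<and> w < u} \<inter> (\<lambda>w. (v,w)) ` {w\<in>G. w < v} = {}" using assms(3) by auto
  have "card ((\<lambda>w. (v,w)) ` {w\<in>G. w < v}) = card {w\<in>G. w < v}"
    by (rule card_image) (auto simp: inj_on_def)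
  then show ?thesis unfolding npairs_def e using card_Un_disjoint[OF f1 _ d] assms(2) by simp
qed

lemma np_insR:
  assumes "finite F" "finite G" "v \<notin> G"
  shows "npairs F (insert v G) = npairs F G + card {u\<in>F. v < u}"
proof -
  have e: "{(u,w). u \<in> F \<and> w \<in> insert v G \<and> w < u} = {(u,w). u \<in> F \<and> w \<in> G \<and> w < u} \<union> (\<lambda>u. (u,v)) ` {u\<in>F. v < u}"
    by auto
  have f1: "finite {(u,w). u \<in> F \<and> w \<in> G \<and> w < u}"
    by (rule finite_subset[of _ "F \<times> G"]) (use assms in auto)
  have d: "{(u,w). u \<in> F \<and> w \<in> G \<and> w < u} \<inter> (\<lambda>u. (u,v)) ` {u\<in>F. v < u} = {}" using assms(3) by auto
  have "card ((\<lambda>u. (u,v)) ` {u\<in>F. v < u}) = card {u\<in>F. v < u}"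
    by (rule card_image) (auto simp: inj_on_def)
  then show ?thesis unfolding npairs_def e using card_Un_disjoint[OF f1 _ d] assms(1) by simp
qed

lemma card_lt_union:
  assumes "finite F" "finite G" "F \<inter> G = {}"
  shows "card {u\<in>F \<union> G. u < v} = card {u\<in>F. u < v} + card {u\<in>G. u < v}"
proof -
  have "{u\<in>F \<union> G. u < v} = {u\<in>F. u < v} \<union> {u\<in>G. u < v}" by auto
  then show ?thesis using assms by (simp add: card_Un_disjoint disjoint_iff)
qed

lemma card_split:
  assumes "finite (F::'a::linorder set)" "v \<notin> F"
  shows "card F = card {u\<in>F. u < v} + card {u\<in>F. v < u}"
proof -
  have "F = {u\<in>F. u < v} \<union> {u\<in>F. v < u}"
  proof (intro equalityI subsetI)
    fix x assume x: "x \<in> F"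
    then have "x \<noteq> v" using assms(2) by auto
    then have "x < v \<or> v < x" by (simp add: neq_iff)
    then show "x \<in> {u\<in>F. u < v} \<union> {u\<in>F. v < u}" using x by auto
  qed auto
  then have "card F = card ({u\<in>F. u < v} \<union> {u\<in>F. v < u})" by simp
  also have "\<dots> = card {u\<in>F. u < v} + card {u\<in>F. v < u}"
    using assms(1) by (intro card_Un_disjoint) auto
  finally show ?thesis .
qed

lemma fromS_bd:
  fixes c :: "'a::linorder set \<Rightarrow> 'k::field"
  assumes fA: "finite A" and fB: "finite B" and dj: "A \<inter> B = {}"
  shows "fromS A B (bd (A \<union> B) c) F G = Dop A B (fromS A B c) F G"
proof (cases "F \<subseteq> A \<and> G \<subseteq> B")
  case False
  have 1: "bd A (\<lambda>F'. fromS A B c F' G) F = 0"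
    unfolding bd_def fromS_def using False by (intro sum.neutral ballI) auto
  have 2: "bd B (fromS A B c F) G = 0"
    unfolding bd_def fromS_def using False by (intro sum.neutral ballI) auto
  have 3: "fromS A B (bd (A \<union> B) c) F G = 0" using False unfolding fromS_def by meson
  show ?thesis unfolding Dop_def 1 2 3 by simp
next
  case True
  then have FA: "F \<subseteq> A" and GB: "G \<subseteq> B" by auto
  have fF: "finite F" using FA fA finite_subset by blast
  have fG: "finite G" using GB fB finite_subset by blast
  have FG: "F \<inter> G = {}" using FA GB dj by auto
  define np where "np = npairs F G"
  have split: "(A \<union> B) - (F \<union> G) = (A - F) \<union> (B - G)" using FA GB dj by auto
  have dj2: "(A - F) \<inter> (B - G) = {}" using dj by auto
  define t where "t = (\<lambda>v. (-1::'k) ^ np * ((-1) ^ card {u\<in>F \<union> G. u < v} * c (insert v (F \<union> G))))"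
  have L: "fromS A B (bd (A \<union> B) c) F G = (\<Sum>v\<in>A - F. t v) + (\<Sum>v\<in>B - G. t v)"
  proof -
    have "fromS A B (bd (A \<union> B) c) F G = (-1) ^ np * (\<Sum>v\<in>(A - F) \<union> (B - G). (-1) ^ card {u\<in>F \<union> G. u < v} * c (insert v (F \<union> G)))"
      unfolding fromS_def np_def bd_def split using True by simp
    also have "\<dots> = (\<Sum>v\<in>(A - F) \<union> (B - G). t v)" unfolding t_def by (simp add: sum_distrib_left)
    also have "\<dots> = (\<Sum>v\<in>A - F. t v) + (\<Sum>v\<in>B - G. t v)"
      using fA fB dj2 by (intro sum.union_disjoint) auto
    finally show ?thesis .
  qed
  have R1: "bd A (\<lambda>F'. fromS A B c F' G) F = (\<Sum>v\<in>A - F. t v)"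
    unfolding bd_def
  proof (rule sum.cong[OF refl])
    fix v assume v: "v \<in> A - F"
    have vG: "v \<notin> G" using v GB dj by auto
    have e1: "npairs (insert v F) G = np + card {w\<in>G. w < v}" using np_insL[OF fF fG] v np_def by auto
    have e2: "card {u\<in>F \<union> G. u < v} = card {u\<in>F. u < v} + card {u\<in>G. u < v}" using card_lt_union[OF fF fG FG] .
    have "fromS A B c (insert v F) G = (-1) ^ (np + card {w\<in>G. w < v}) * c (insert v (F \<union> G))"
      unfolding fromS_def e1 using v GB FA by auto
    then show "(-1) ^ card {u\<in>F. u < v} * fromS A B c (insert v F) G = t v"
      unfolding t_def e2 by (simp add: power_add algebra_simps)
  qed
  have R2: "(-1) ^ card F * bd B (fromS A B c F) G = (\<Sum>v\<in>B - G. t v)"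
    unfolding bd_def sum_distrib_left
  proof (rule sum.cong[OF refl])
    fix v assume v: "v \<in> B - G"
    have vF: "v \<notin> F" using v FA dj by auto
    have e1: "npairs F (insert v G) = np + card {u\<in>F. v < u}" using np_insR[OF fF fG] v np_def by auto
    have e2: "card {u\<in>F \<union> G. u < v} = card {u\<in>F. u < v} + card {u\<in>G. u < v}" using card_lt_union[OF fF fG FG] .
    have e3: "card F = card {u\<in>F. u < v} + card {u\<in>F. v < u}" using card_split[OF fF vF] .
    have "fromS A B c F (insert v G) = (-1) ^ (np + card {u\<in>F. v < u}) * c (insert v (F \<union> G))"
      unfolding fromS_def e1 using v FA GB by auto
    then have "(-1) ^ card F * ((-1) ^ card {u\<in>G. u < v} * fromS A B c F (insert v G))
       = ((-1::'k) ^ card {u\<in>F. v < u} * (-1) ^ card {u\<in>F. v < u}) * ((-1) ^ np * ((-1) ^ card {u\<in>F. u < v} * (-1) ^ card {u\<in>G. u < v}) * c (insert v (F \<union> G)))"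
      unfolding e3 by (simp add: power_add algebra_simps)
    also have "\<dots> = t v" unfolding t_def e2 neg1_sq by (simp add: power_add algebra_simps)
    finally show "(-1) ^ card F * ((-1) ^ card {u\<in>G. u < v} * fromS A B c F (insert v G)) = t v" .
  qed
  show ?thesis unfolding L Dop_def R1 R2 ..
qed



definition nocross :: "('a \<Rightarrow> 'a \<Rightarrow> bool) \<Rightarrow> 'a set \<Rightarrow> 'a set \<Rightarrow> bool" where
  "nocross E A B \<longleftrightarrow> (\<forall>u\<in>A. \<forall>v\<in>B. \<not> E u v \<and> \<not> E v u)"

lemma from_to:
  assumes "A \<inter> B = {}" "bichain E A B n c2"
  shows "fromS A B (toS A B c2) F G = c2 F G"
proof (cases "F \<subseteq> A \<and> G \<subseteq> B")
  case True
  then have "(F \<union> G) \<inter> A = F" "(F \<union> G) \<inter> B = G" "F \<union> G \<subseteq> A \<union> B" using assms(1) by auto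
  then show ?thesis using True unfolding fromS_def toS_def
    by (simp add: mult.assoc[symmetric] neg1_sq) 
next
  case False
  then have "c2 F G = 0" using assms(2) unfolding bichain_def ind_face_def by blast
  then show ?thesis using False unfolding fromS_def by auto
qed

lemma to_from:
  assumes "A \<inter> B = {}" "\<forall>X. \<not> X \<subseteq> A \<union> B \<longrightarrow> z X = 0"
  shows "toS A B (fromS A B z) X = z X"
proof (cases "X \<subseteq> A \<union> B")
  case True
  then have "(X \<inter> A) \<union> (X \<inter> B) = X" by auto
  then show ?thesis using True unfolding fromS_def toS_def
    by (simp add: mult.assoc[symmetric] neg1_sq)
next
  case False then show ?thesis using assms(2) unfolding toS_def by auto
qed

lemma fromS_inj:
  assumes "A \<inter> B = {}" "\<forall>X. \<not> X \<subseteq> A \<union> B \<longrightarrow> za X = 0" "\<forall>X. \<not> X \<subseteq> A \<union> B \<longrightarrow> zb X = 0"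
    "\<forall>F G. fromS A B za F G = fromS A B zb F G"
  shows "za X = zb X"
proof -
  have "za X = toS A B (fromS A B za) X" using to_from[OF assms(1,2)] by simp
  also have "\<dots> = toS A B (fromS A B zb) X" unfolding toS_def using assms(4) by simp
  also have "\<dots> = zb X" using to_from[OF assms(1,3)] by simp
  finally show ?thesis .
qed

lemma chain_supp: "is_chain E S n z \<Longrightarrow> \<forall>X. \<not> X \<subseteq> S \<longrightarrow> z X = 0"
  unfolding is_chain_def ind_face_def by blast

lemma bd_supp: "\<forall>X. \<not> X \<subseteq> S \<longrightarrow> c X = 0 \<Longrightarrow> \<forall>X. \<not> X \<subseteq> S \<longrightarrow> bd S c X = 0"
  unfolding bd_def by (auto intro!: sum.neutral)

lemma chain_bichain:
  assumes "A \<inter> B = {}" "finite A" "finite B" "is_chain E (A \<union> B) n z"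
  shows "bichain E A B n (fromS A B z)"
  unfolding bichain_def
proof (intro allI impI)
  fix F G assume nz: "fromS A B z F G \<noteq> 0"
  then have FG: "F \<subseteq> A" "G \<subseteq> B" "z (F \<union> G) \<noteq> 0" unfolding fromS_def by (auto split: if_splits)
  then have i: "ind_face E (A \<union> B) (F \<union> G)" "card (F \<union> G) = n" using assms(4) unfolding is_chain_def by auto
  have fF: "finite F" by (rule finite_subset[OF FG(1) assms(2)])
  have fG: "finite G" by (rule finite_subset[OF FG(2) assms(3)])
  have "F \<inter> G = {}" using FG assms(1) by auto
  then have "card (F \<union> G) = card F + card G" using fF fG by (simp add: card_Un_disjoint)
  then show "ind_face E A F \<and> ind_face E B G \<and> card F + card G = n"
    using i FG unfolding ind_face_def by auto
qed

lemma bichain_chain: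
  assumes "A \<inter> B = {}" "finite A" "finite B" "nocross E A B" "bichain E A B n c2"
  shows "is_chain E (A \<union> B) n (toS A B c2)"
  unfolding is_chain_def
proof (intro allI impI)
  fix X assume nz: "toS A B c2 X \<noteq> 0"
  then have X: "X \<subseteq> A \<union> B" "c2 (X \<inter> A) (X \<inter> B) \<noteq> 0" unfolding toS_def by (auto split: if_splits)
  then have i: "ind_face E A (X \<inter> A)" "ind_face E B (X \<inter> B)" "card (X \<inter> A) + card (X \<inter> B) = n"
    using assms(5) unfolding bichain_def by auto
  have XU: "X = (X \<inter> A) \<union> (X \<inter> B)" using X(1) by auto
  have "card X = card (X \<inter> A) + card (X \<inter> B)"
    using assms(1,2,3) by (subst XU) (auto intro!: card_Un_disjoint)
  moreover have "ind_face E (A \<union> B) X"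
    unfolding ind_face_def
  proof (intro conjI ballI)
    show "X \<subseteq> A \<union> B" by fact
    fix u v assume uv: "u \<in> X" "v \<in> X"
    show "\<not> E u v"
    proof (cases "u \<in> A")
      case True
      show ?thesis
      proof (cases "v \<in> A")
        case True
        then show ?thesis using \<open>u \<in> A\<close> uv i(1) unfolding ind_face_def by auto
      next
        case False
        then have "v \<in> B" using uv X(1) by auto
        then show ?thesis using \<open>u \<in> A\<close> assms(4) unfolding nocross_def by auto
      qed
    next
      case False
      then have uB: "u \<in> B" using uv X(1) by auto
      show ?thesis
      proof (cases "v \<in> A")
        case True
        then show ?thesis using uB assms(4) unfolding nocross_def by auto
      next
        case False
        then have "v \<in> B" using uv X(1) by auto
        then show ?thesis using uB uv i(2) unfolding ind_face_def by auto
      qed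
    qed
  qed
  ultimately show "ind_face E (A \<union> B) X \<and> card X = n" using i(3) by simp
qed

lemma hom_to_bi:
  fixes E :: "'a::linorder \<Rightarrow> 'a \<Rightarrow> bool"
  assumes dj: "A \<inter> B = {}" and fA: "finite A" and fB: "finite B" and nc: "nocross E A B"
    and h: "hom_nz TYPE('k::field) E (A \<union> B) n"
  shows "\<exists>z2 :: 'a set \<Rightarrow> 'a set \<Rightarrow> 'k. bichain E A B n z2 \<and> (\<forall>F G. Dop A B z2 F G = 0) \<and>
     \<not> (\<exists>c2. bichain E A B (Suc n) c2 \<and> (\<forall>F G. Dop A B c2 F G = z2 F G))"
proof -
  obtain z :: "'a set \<Rightarrow> 'k" where z: "is_chain E (A \<union> B) n z" "\<forall>\<tau>. bd (A \<union> B) z \<tau> = 0"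
    "\<not> (\<exists>c. is_chain E (A \<union> B) (Suc n) c \<and> (\<forall>\<tau>. bd (A \<union> B) c \<tau> = z \<tau>))"
    using h unfolding hom_nz_def by blast
  define z2 where "z2 = fromS A B z"
  have b: "bichain E A B n z2" unfolding z2_def using chain_bichain[OF dj fA fB z(1)] .
  have cyc: "\<forall>F G. Dop A B z2 F G = 0"
  proof (intro allI)
    fix F G
    have "Dop A B z2 F G = fromS A B (bd (A \<union> B) z) F G" unfolding z2_def by (rule fromS_bd[OF fA fB dj, symmetric])
    then show "Dop A B z2 F G = 0" using z(2) unfolding fromS_def by simp
  qed
  have nb: "\<not> (\<exists>c2. bichain E A B (Suc n) c2 \<and> (\<forall>F G. Dop A B c2 F G = z2 F G))"
  proof
    assume "\<exists>c2. bichain E A B (Suc n) c2 \<and> (\<forall>F G. Dop A B c2 F G = z2 F G)"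
    then obtain c2 where c2: "bichain E A B (Suc n) c2" "\<forall>F G. Dop A B c2 F G = z2 F G" by blast
    define c where "c = toS A B c2"
    have cc: "is_chain E (A \<union> B) (Suc n) c" unfolding c_def using bichain_chain[OF dj fA fB nc c2(1)] .
    have fc: "fromS A B c = c2" unfolding c_def using from_to[OF dj c2(1)] by (intro ext) simp
    have "\<forall>\<tau>. bd (A \<union> B) c \<tau> = z \<tau>"
    proof
      fix \<tau>
      show "bd (A \<union> B) c \<tau> = z \<tau>"
      proof (rule fromS_inj[OF dj])
        show "\<forall>X. \<not> X \<subseteq> A \<union> B \<longrightarrow> bd (A \<union> B) c X = 0" using bd_supp chain_supp[OF cc] by blast
        show "\<forall>X. \<not> X \<subseteq> A \<union> B \<longrightarrow> z X = 0" using chain_supp[OF z(1)] .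
        show "\<forall>F G. fromS A B (bd (A \<union> B) c) F G = fromS A B z F G"
          using fromS_bd[OF fA fB dj, of c] fc c2(2) z2_def by simp
      qed
    qed
    then show False using z(3) cc by blast
  qed
  show ?thesis using b cyc nb by blast
qed

lemma bi_to_hom:
  fixes E :: "'a::linorder \<Rightarrow> 'a \<Rightarrow> bool" and z2 :: "'a set \<Rightarrow> 'a set \<Rightarrow> 'k::field"
  assumes dj: "A \<inter> B = {}" and fA: "finite A" and fB: "finite B" and nc: "nocross E A B"
    and b: "bichain E A B n z2" and cyc: "\<forall>F G. Dop A B z2 F G = 0"
    and nb: "\<not> (\<exists>c2. bichain E A B (Suc n) c2 \<and> (\<forall>F G. Dop A B c2 F G = z2 F G))"
  shows "hom_nz TYPE('k) E (A \<union> B) n"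
proof -
  define z where "z = toS A B z2"
  have zc: "is_chain E (A \<union> B) n z" unfolding z_def using bichain_chain[OF dj fA fB nc b] .
  have fz: "fromS A B z = z2" unfolding z_def using from_to[OF dj b] by (intro ext) simp
  have zcyc: "\<forall>\<tau>. bd (A \<union> B) z \<tau> = 0"
  proof
    fix \<tau>
    show "bd (A \<union> B) z \<tau> = 0"
    proof (rule fromS_inj[OF dj, where zb = "\<lambda>X. 0"])
      show "\<forall>X. \<not> X \<subseteq> A \<union> B \<longrightarrow> bd (A \<union> B) z X = 0" using bd_supp chain_supp[OF zc] by blast
      show "\<forall>X. \<not> X \<subseteq> A \<union> B \<longrightarrow> (0::'k) = 0" by simp
      show "\<forall>F G. fromS A B (bd (A \<union> B) z) F G = fromS A B (\<lambda>X. 0) F G"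
        using fromS_bd[OF fA fB dj, of z] fz cyc by (simp add: fromS_def)
    qed
  qed
  have znb: "\<not> (\<exists>c. is_chain E (A \<union> B) (Suc n) c \<and> (\<forall>\<tau>. bd (A \<union> B) c \<tau> = z \<tau>))"
  proof
    assume "\<exists>c. is_chain E (A \<union> B) (Suc n) c \<and> (\<forall>\<tau>. bd (A \<union> B) c \<tau> = z \<tau>)"
    then obtain c where c: "is_chain E (A \<union> B) (Suc n) c" "\<forall>\<tau>. bd (A \<union> B) c \<tau> = z \<tau>" by blast
    have "bichain E A B (Suc n) (fromS A B c)" using chain_bichain[OF dj fA fB c(1)] .
    moreover have "\<forall>F G. Dop A B (fromS A B c) F G = z2 F G"
    proof (intro allI)
      fix F G
      have "Dop A B (fromS A B c) F G = fromS A B (bd (A \<union> B) c) F G" by (rule fromS_bd[OF fA fB dj, symmetric])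
      also have "\<dots> = fromS A B z F G" using c(2) unfolding fromS_def by simp
      finally show "Dop A B (fromS A B c) F G = z2 F G" using fz by simp
    qed
    ultimately show False using nb by blast
  qed
  show ?thesis unfolding hom_nz_def using zc zcyc znb by blast
qed



lemma is_chain_add: "is_chain E S n c1 \<Longrightarrow> is_chain E S n c2 \<Longrightarrow> is_chain E S n (\<lambda>F. c1 F + c2 F)"
  unfolding is_chain_def by (metis add.right_neutral add_0)

lemma is_chain_scale: "is_chain E S n c \<Longrightarrow> is_chain E S n (\<lambda>F. a * c F)"
  unfolding is_chain_def by simp

lemma is_chain_zero: "is_chain E S n (\<lambda>F. 0)"
  unfolding is_chain_def by simp

lemma func:
  fixes E :: "'a::linorder \<Rightarrow> 'a \<Rightarrow> bool" and z :: "'a set \<Rightarrow> 'k::field"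
  assumes fA: "finite A" and zc: "is_chain E A p z"
    and nb: "\<not> (\<exists>c. is_chain E A (Suc p) c \<and> (\<forall>\<tau>. bd A c \<tau> = z \<tau>))"
  shows "\<exists>f. (\<forall>c. is_chain E A (Suc p) c \<longrightarrow> (\<Sum>F\<in>{F. F \<subseteq> A \<and> card F = p}. f F * bd A c F) = 0)
      \<and> (\<Sum>F\<in>{F. F \<subseteq> A \<and> card F = p}. f F * z F) = 1"
proof -
  define U where "U = {bd A c | c :: 'a set \<Rightarrow> 'k. is_chain E A (Suc p) c}"
  define D where "D = {F. F \<subseteq> A \<and> card F = p}"
  have "\<exists>f. (\<forall>u\<in>U. (\<Sum>d\<in>D. f d * u d) = 0) \<and> (\<Sum>d\<in>D. f d * z d) = 1"
  proof (rule sep)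
    show "finite D" unfolding D_def using fA by (rule rev_finite_subset[OF finite_Pow_iff[THEN iffD2]]) auto
    show "\<forall>u\<in>U. \<forall>d. d \<notin> D \<longrightarrow> u d = 0"
    proof (intro ballI allI impI)
      fix u d assume u: "u \<in> U" and d: "d \<notin> D"
      then obtain c where c: "u = bd A c" "is_chain E A (Suc p) c" unfolding U_def by blast
      then have "is_chain E A p u" using bd_chain by blast
      then show "u d = 0" using d unfolding is_chain_def D_def ind_face_def by blast
    qed
    show "\<forall>u\<in>U. \<forall>v\<in>U. (\<lambda>d. u d + v d) \<in> U"
    proof (intro ballI)
      fix u v assume "u \<in> U" "v \<in> U"
      then obtain c1 c2 where "u = bd A c1" "is_chain E A (Suc p) c1" "v = bd A c2" "is_chain E A (Suc p) c2"
        unfolding U_def by blast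
      then have "(\<lambda>d. u d + v d) = bd A (\<lambda>F. c1 F + c2 F)" "is_chain E A (Suc p) (\<lambda>F. c1 F + c2 F)"
        using is_chain_add by (auto simp: bd_add)
      then show "(\<lambda>d. u d + v d) \<in> U" unfolding U_def by blast
    qed
    show "\<forall>u\<in>U. \<forall>a. (\<lambda>d. a * u d) \<in> U"
    proof (intro ballI allI)
      fix u a assume "u \<in> U"
      then obtain c1 where "u = bd A c1" "is_chain E A (Suc p) c1"
        unfolding U_def by blast
      then have "(\<lambda>d. a * u d) = bd A (\<lambda>F. a * c1 F)" "is_chain E A (Suc p) (\<lambda>F. a * c1 F)"
        using is_chain_scale by (auto simp: bd_scale)
      then show "(\<lambda>d. a * u d) \<in> U" unfolding U_def by blast
    qed
    have "(\<lambda>d. 0) = bd A (\<lambda>F. 0::'k)" by (auto simp: bd_zero)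
    then show "(\<lambda>d. 0) \<in> U" unfolding U_def using is_chain_zero by blast
    show "\<forall>d. d \<notin> D \<longrightarrow> z d = 0" using zc unfolding is_chain_def D_def ind_face_def by blast
    show "z \<notin> U"
    proof
      assume "z \<in> U"
      then obtain c where "z = bd A c" "is_chain E A (Suc p) c" unfolding U_def by blast
      then show False using nb by auto
    qed
  qed
  then obtain f where f: "\<forall>u\<in>U. (\<Sum>d\<in>D. f d * u d) = 0" "(\<Sum>d\<in>D. f d * z d) = 1" by blast
  show ?thesis
  proof (intro exI conjI allI impI)
    fix c :: "'a set \<Rightarrow> 'k" assume "is_chain E A (Suc p) c"
    then have "bd A c \<in> U" unfolding U_def by blast
    then show "(\<Sum>F\<in>{F. F \<subseteq> A \<and> card F = p}. f F * bd A c F) = 0" using f(1) unfolding D_def by blast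
  next
    show "(\<Sum>F\<in>{F. F \<subseteq> A \<and> card F = p}. f F * z F) = 1" using f(2) unfolding D_def .
  qed
qed

lemma func_other:
  fixes c :: "'a::linorder set \<Rightarrow> 'k::field"
  assumes fA: "finite A" and cc: "is_chain E A m c" and m: "m \<noteq> Suc p"
  shows "(\<Sum>F\<in>{F. F \<subseteq> A \<and> card F = p}. f F * bd A c F) = 0"
proof (rule sum.neutral, rule ballI)
  fix F assume F: "F \<in> {F. F \<subseteq> A \<and> card F = p}"
  show "f F * bd A c F = 0"
  proof (rule ccontr)
    assume "f F * bd A c F \<noteq> 0"
    then have "bd A c F \<noteq> 0" by auto
    then obtain v where v: "v \<in> A - F" "c (insert v F) \<noteq> 0" using bd_nz by blast
    then have "card (insert v F) = m" using cc unfolding is_chain_def by blast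
    moreover have "finite F" using F fA finite_subset by blast
    ultimately show False using F v m by auto
  qed
qed

lemma func_all:
  fixes E :: "'a::linorder \<Rightarrow> 'a \<Rightarrow> bool" and z :: "'a set \<Rightarrow> 'k::field"
  assumes fA: "finite A" and zc: "is_chain E A p z"
    and nb: "\<not> (\<exists>c. is_chain E A (Suc p) c \<and> (\<forall>\<tau>. bd A c \<tau> = z \<tau>))"
  shows "\<exists>f. (\<forall>m c. is_chain E A m c \<longrightarrow> (\<Sum>F\<in>{F. F \<subseteq> A \<and> card F = p}. f F * bd A c F) = 0)
      \<and> (\<Sum>F\<in>{F. F \<subseteq> A \<and> card F = p}. f F * z F) = 1"
proof -
  obtain f where f: "\<forall>c. is_chain E A (Suc p) c \<longrightarrow> (\<Sum>F\<in>{F. F \<subseteq> A \<and> card F = p}. f F * bd A c F) = 0"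
      "(\<Sum>F\<in>{F. F \<subseteq> A \<and> card F = p}. f F * z F) = 1"
    using func[OF assms] by blast
  show ?thesis
  proof (intro exI conjI allI impI)
    fix m and c :: "'a set \<Rightarrow> 'k" assume cc: "is_chain E A m c"
    show "(\<Sum>F\<in>{F. F \<subseteq> A \<and> card F = p}. f F * bd A c F) = 0"
    proof (cases "m = Suc p")
      case True then show ?thesis using f(1) cc by blast
    next
      case False then show ?thesis using func_other[OF fA cc] by blast
    qed
  qed (rule f(2))
qed

lemma slice_chain:
  assumes "bichain E A B n c"
  shows "is_chain E A (n - card G) (\<lambda>F. c F G)"
  using assms unfolding bichain_def is_chain_def by (metis add_diff_cancel_right')

lemma LB_bi:
  fixes E :: "'a::linorder \<Rightarrow> 'a \<Rightarrow> bool"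
  assumes fA: "finite A" and fB: "finite B"
    and hA: "hom_nz TYPE('k::field) E A p" and hB: "hom_nz TYPE('k) E B q"
  shows "\<exists>z :: 'a set \<Rightarrow> 'a set \<Rightarrow> 'k. bichain E A B (p + q) z \<and> (\<forall>F G. Dop A B z F G = 0) \<and>
     \<not> (\<exists>c. bichain E A B (Suc (p + q)) c \<and> (\<forall>F G. Dop A B c F G = z F G))"
proof -
  obtain z1 :: "'a set \<Rightarrow> 'k" where z1: "is_chain E A p z1" "\<forall>\<tau>. bd A z1 \<tau> = 0"
    "\<not> (\<exists>c. is_chain E A (Suc p) c \<and> (\<forall>\<tau>. bd A c \<tau> = z1 \<tau>))"
    using hA unfolding hom_nz_def by blast
  obtain z2 :: "'a set \<Rightarrow> 'k" where z2: "is_chain E B q z2" "\<forall>\<tau>. bd B z2 \<tau> = 0"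
    "\<not> (\<exists>c. is_chain E B (Suc q) c \<and> (\<forall>\<tau>. bd B c \<tau> = z2 \<tau>))"
    using hB unfolding hom_nz_def by blast
  define Dp where "Dp = {F. F \<subseteq> A \<and> card F = p}"
  obtain f where f: "\<forall>m c. is_chain E A m c \<longrightarrow> (\<Sum>F\<in>Dp. f F * bd A c F) = 0" "(\<Sum>F\<in>Dp. f F * z1 F) = 1"
    using func_all[OF fA z1(1) z1(3)] unfolding Dp_def by blast
  define zz where "zz = (\<lambda>F G. z1 F * z2 G)"
  have b: "bichain E A B (p + q) zz"
    using z1(1) z2(1) unfolding bichain_def is_chain_def zz_def by auto
  have cyc: "\<forall>F G. Dop A B zz F G = 0"
  proof (intro allI)
    fix F G
    have e: "(\<lambda>F'. z1 F' * z2 G) = (\<lambda>F'. z2 G * z1 F')" by (simp add: mult.commute)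
    show "Dop A B zz F G = 0"
      unfolding Dop_def zz_def e bd_scale using z1(2) z2(2) by simp
  qed
  have nb: "\<not> (\<exists>c. bichain E A B (Suc (p + q)) c \<and> (\<forall>F G. Dop A B c F G = zz F G))"
  proof
    assume "\<exists>c. bichain E A B (Suc (p + q)) c \<and> (\<forall>F G. Dop A B c F G = zz F G)"
    then obtain c where c: "bichain E A B (Suc (p + q)) c" "\<forall>F G. Dop A B c F G = zz F G" by blast
    define y where "y = (\<lambda>G. (-1) ^ p * (\<Sum>F\<in>Dp. f F * c F G))"
    have yb: "\<forall>G. bd B y G = z2 G"
    proof
      fix G
      have "bd B y G = (-1) ^ p * (\<Sum>F\<in>Dp. f F * bd B (c F) G)"
        unfolding y_def bd_scale bd_sum by simp
      also have "\<dots> = (\<Sum>F\<in>Dp. f F * ((-1) ^ p * bd B (c F) G))"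
        by (simp add: sum_distrib_left algebra_simps)
      also have "\<dots> = (\<Sum>F\<in>Dp. f F * (z1 F * z2 G - bd A (\<lambda>F'. c F' G) F))"
      proof (rule sum.cong[OF refl])
        fix F assume F: "F \<in> Dp"
        have "Dop A B c F G = zz F G" using c(2) by blast
        then have "bd A (\<lambda>F'. c F' G) F + (-1) ^ p * bd B (c F) G = z1 F * z2 G"
          using F unfolding Dop_def zz_def Dp_def by simp
        then have "(-1) ^ p * bd B (c F) G = z1 F * z2 G - bd A (\<lambda>F'. c F' G) F"
          by (simp add: algebra_simps)
        then show "f F * ((-1) ^ p * bd B (c F) G) = f F * (z1 F * z2 G - bd A (\<lambda>F'. c F' G) F)"
          by simp
      qed
      also have "\<dots> = z2 G * (\<Sum>F\<in>Dp. f F * z1 F) - (\<Sum>F\<in>Dp. f F * bd A (\<lambda>F'. c F' G) F)"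
        by (simp add: sum_subtractf sum_distrib_left algebra_simps)
      also have "(\<Sum>F\<in>Dp. f F * bd A (\<lambda>F'. c F' G) F) = 0"
        using f(1) slice_chain[OF c(1)] by blast
      finally show "bd B y G = z2 G" using f(2) by simp
    qed
    have yc: "is_chain E B (Suc q) y"
      unfolding is_chain_def
    proof (intro allI impI)
      fix G assume "y G \<noteq> 0"
      then have "(\<Sum>F\<in>Dp. f F * c F G) \<noteq> 0" unfolding y_def by auto
      then obtain F where F: "F \<in> Dp" "c F G \<noteq> 0" by (metis (no_types, lifting) mult_zero_right sum.neutral)
      then have h: "ind_face E A F \<and> ind_face E B G \<and> card F + card G = Suc (p + q)" using c(1) unfolding bichain_def by blast
      have "card F = p" using F(1) unfolding Dp_def by blast
      with h have "ind_face E B G" "card F + card G = Suc (p + q)" "card F = p" by auto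
      then show "ind_face E B G \<and> card G = Suc q" by simp
    qed
    show False using z2(3) yc yb by blast
  qed
  show ?thesis using b cyc nb by blast
qed



lemma bichain_add: "bichain E A B n c1 \<Longrightarrow> bichain E A B n c2 \<Longrightarrow> bichain E A B n (\<lambda>F G. c1 F G + c2 F G)"
  unfolding bichain_def by (metis add.right_neutral add_0)

lemma bichain_diff: "bichain E A B n c1 \<Longrightarrow> bichain E A B n c2 \<Longrightarrow> bichain E A B n (\<lambda>F G. c1 F G - c2 F G)"
  unfolding bichain_def by (metis diff_zero diff_self)

lemma elim:
  fixes E :: "'a::linorder \<Rightarrow> 'a \<Rightarrow> bool" and z :: "'a set \<Rightarrow> 'a set \<Rightarrow> 'k::field"
  assumes fA: "finite A" and fB: "finite B"
    and np: "\<not> (\<exists>p q. p + q = n \<and> hom_nz TYPE('k) E A p \<and> hom_nz TYPE('k) E B q)"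
    and zb: "bichain E A B n z" and zc: "\<forall>F G. Dop A B z F G = 0"
    and top: "\<forall>F G. z F G \<noteq> 0 \<longrightarrow> card G \<le> k"
    and G0: "card G0 = k" and F0: "z F0 G0 \<noteq> 0"
  shows "\<exists>w. bichain E A B (Suc n) w \<and>
    (\<forall>F G. k \<le> card G \<longrightarrow> z F G - Dop A B w F G \<noteq> 0 \<longrightarrow> card G = k \<and> G \<noteq> G0 \<and> (\<exists>F'. z F' G \<noteq> 0))"
proof -
  have i0: "ind_face E A F0" "ind_face E B G0" "card F0 + card G0 = n" using zb F0 unfolding bichain_def by auto
  have G0B: "G0 \<subseteq> B" using i0 unfolding ind_face_def by auto
  have fG0: "finite G0" using G0B fB finite_subset by blast
  define p where "p = n - k"
  have pk: "p + k = n" using i0 G0 unfolding p_def by auto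
  define zG0 where "zG0 = (\<lambda>F. z F G0)"
  have zG0c: "is_chain E A p zG0" unfolding zG0_def p_def using slice_chain[OF zb, of G0] G0 by simp
  have bdB0: "bd B (z F) G0 = 0" for F
    unfolding bd_def
  proof (intro sum.neutral ballI)
    fix v assume v: "v \<in> B - G0"
    have "card (insert v G0) = Suc k" using v fG0 G0 by auto
    then have "z F (insert v G0) = 0" using top by (metis Suc_n_not_le_n)
    then show "(-1) ^ card {u\<in>G0. u < v} * z F (insert v G0) = 0" by simp
  qed
  have zG0cyc: "\<forall>\<tau>. bd A zG0 \<tau> = 0"
  proof
    fix F
    have "Dop A B z F G0 = 0" using zc by blast
    then show "bd A zG0 F = 0" unfolding Dop_def zG0_def bdB0 by simp
  qed
  show ?thesis
  proof (cases "\<exists>a. is_chain E A (Suc p) a \<and> (\<forall>\<tau>. bd A a \<tau> = zG0 \<tau>)")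
    case True
    then obtain a where a: "is_chain E A (Suc p) a" "\<forall>\<tau>. bd A a \<tau> = zG0 \<tau>" by blast
    define w where "w = (\<lambda>F G. if G = G0 then a F else 0)"
    have wb: "bichain E A B (Suc n) w"
      unfolding bichain_def
    proof (intro allI impI)
      fix F G assume "w F G \<noteq> 0"
      then have "G = G0" "a F \<noteq> 0" unfolding w_def by (auto split: if_splits)
      then show "ind_face E A F \<and> ind_face E B G \<and> card F + card G = Suc n"
        using a(1) i0 pk G0 unfolding is_chain_def by auto
    qed
    have Dw: "Dop A B w F G = (if G = G0 then z F G0 else 0)" if kG: "k \<le> card G" for F G
    proof -
      have b2: "bd B (w F) G = 0"
        unfolding bd_def
      proof (intro sum.neutral ballI)
        fix v assume v: "v \<in> B - G"
        have "w F (insert v G) = 0"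
        proof (rule ccontr)
          assume "w F (insert v G) \<noteq> 0"
          then have e: "insert v G = G0" unfolding w_def by (auto split: if_splits)
          then have "finite G" using fG0 by auto
          then have "card G0 = Suc (card G)" using e v by auto
          then show False using kG G0 by simp
        qed
        then show "(-1) ^ card {u\<in>G. u < v} * w F (insert v G) = 0" by simp
      qed
      have b1: "bd A (\<lambda>F'. w F' G) F = (if G = G0 then z F G0 else 0)"
      proof (cases "G = G0")
        case True
        then have "(\<lambda>F'. w F' G) = a" unfolding w_def by auto
        then show ?thesis using a(2) True unfolding zG0_def by simp
      next
        case False
        then have "(\<lambda>F'. w F' G) = (\<lambda>F'. 0)" unfolding w_def by auto
        then show ?thesis using False by (simp add: bd_zero)
      qed
      show ?thesis unfolding Dop_def b1 b2 by simp
    qed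
    show ?thesis
    proof (rule exI[of _ w], intro conjI allI impI)
      show "bichain E A B (Suc n) w" by (rule wb)
      fix F G assume kG: "k \<le> card G" and nz: "z F G - Dop A B w F G \<noteq> 0"
      have "G \<noteq> G0" using nz Dw[OF kG] by auto
      then have zz: "z F G \<noteq> 0" using nz Dw[OF kG] by auto
      then show "card G = k" using top kG by fastforce
      show "G \<noteq> G0" by fact
      show "\<exists>F'. z F' G \<noteq> 0" using zz by blast
    qed
  next
    case False
    then have hA: "hom_nz TYPE('k) E A p" unfolding hom_nz_def using zG0c zG0cyc by blast
    then have nhB: "\<not> hom_nz TYPE('k) E B k" using np pk by blast
    define Dp where "Dp = {F. F \<subseteq> A \<and> card F = p}"
    obtain f where f: "\<forall>m c. is_chain E A m c \<longrightarrow> (\<Sum>F\<in>Dp. f F * bd A c F) = 0" "(\<Sum>F\<in>Dp. f F * zG0 F) = 1"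
      using func_all[OF fA zG0c False] unfolding Dp_def by blast
    define y where "y = (\<lambda>G. \<Sum>F\<in>Dp. f F * z F G)"
    have yc: "is_chain E B k y"
      unfolding is_chain_def
    proof (intro allI impI)
      fix G assume "y G \<noteq> 0"
      then obtain F where F: "F \<in> Dp" "z F G \<noteq> 0" unfolding y_def by (metis (no_types, lifting) mult_zero_right sum.neutral)
      then have h: "ind_face E A F \<and> ind_face E B G \<and> card F + card G = n" using zb unfolding bichain_def by blast
      have "card F = p" using F(1) unfolding Dp_def by blast
      with h pk show "ind_face E B G \<and> card G = k" by auto
    qed
    have ycyc: "\<forall>\<tau>. bd B y \<tau> = 0"
    proof
      fix G
      have "bd B y G = (\<Sum>F\<in>Dp. f F * bd B (z F) G)"
        unfolding y_def bd_sum bd_scale by simp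
      also have "\<dots> = (\<Sum>F\<in>Dp. (- ((-1) ^ p)) * (f F * bd A (\<lambda>F'. z F' G) F))"
      proof (rule sum.cong[OF refl])
        fix F assume F: "F \<in> Dp"
        have "Dop A B z F G = 0" using zc by blast
        then have "bd A (\<lambda>F'. z F' G) F + (-1) ^ p * bd B (z F) G = 0"
          using F unfolding Dop_def Dp_def by simp
        then have "(-1) ^ p * (bd A (\<lambda>F'. z F' G) F + (-1) ^ p * bd B (z F) G) = 0" by simp
        then have "(-1) ^ p * bd A (\<lambda>F'. z F' G) F + ((-1) ^ p * (-1) ^ p) * bd B (z F) G = 0"
          by (simp only: distrib_left mult.assoc)
        then have "(-1) ^ p * bd A (\<lambda>F'. z F' G) F + bd B (z F) G = 0" by (simp add: neg1_sq)
        then have "bd B (z F) G = (- ((-1) ^ p)) * bd A (\<lambda>F'. z F' G) F"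
          by (simp add: add_eq_0_iff)
        then show "f F * bd B (z F) G = (- ((-1) ^ p)) * (f F * bd A (\<lambda>F'. z F' G) F)" by simp
      qed
      also have "\<dots> = (- ((-1) ^ p)) * (\<Sum>F\<in>Dp. f F * bd A (\<lambda>F'. z F' G) F)"
        by (simp add: sum_distrib_left)
      also have "(\<Sum>F\<in>Dp. f F * bd A (\<lambda>F'. z F' G) F) = 0"
        using f(1) slice_chain[OF zb] by blast
      finally show "bd B y G = 0" by simp
    qed
    obtain e where e: "is_chain E B (Suc k) e" "\<forall>\<tau>. bd B e \<tau> = y \<tau>"
      using nhB yc ycyc unfolding hom_nz_def by blast
    define w where "w = (\<lambda>F G. (-1) ^ p * z F G0 * e G)"
    have wb: "bichain E A B (Suc n) w"
      unfolding bichain_def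
    proof (intro allI impI)
      fix F G assume "w F G \<noteq> 0"
      then have "z F G0 \<noteq> 0" "e G \<noteq> 0" unfolding w_def by auto
      then have "ind_face E A F \<and> ind_face E B G0 \<and> card F + card G0 = n" "ind_face E B G" "card G = Suc k"
        using zb e(1) unfolding bichain_def is_chain_def by auto
      then show "ind_face E A F \<and> ind_face E B G \<and> card F + card G = Suc n" using G0 by auto
    qed
    have Dw: "Dop A B w F G = z F G0 * y G" for F G
    proof -
      have e1: "(\<lambda>F'. w F' G) = (\<lambda>F'. ((-1) ^ p * e G) * zG0 F')" unfolding w_def zG0_def by (auto simp: algebra_simps)
      have b1: "bd A (\<lambda>F'. w F' G) F = 0" unfolding e1 bd_scale using zG0cyc by simp
      have b2: "bd B (w F) G = (-1) ^ p * z F G0 * y G"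
        unfolding w_def bd_scale using e(2) by simp
      have "(-1) ^ card F * ((-1) ^ p * z F G0 * y G) = z F G0 * y G"
      proof (cases "z F G0 = 0")
        case True then show ?thesis by simp
      next
        case False
        then have "card F = p" using zG0c unfolding is_chain_def zG0_def by blast
        then show ?thesis by (simp add: mult.assoc[symmetric] neg1_sq)
      qed
      then show ?thesis unfolding Dop_def b1 b2 by simp
    qed
    have y0: "y G0 = 1" using f(2) unfolding y_def zG0_def .
    have ysupp: "y G = 0" if "card G \<noteq> k" for G using yc that unfolding is_chain_def by blast
    show ?thesis
    proof (rule exI[of _ w], intro conjI allI impI)
      show "bichain E A B (Suc n) w" by (rule wb)
      fix F G assume kG: "k \<le> card G" and nz: "z F G - Dop A B w F G \<noteq> 0"
      then have nz2: "z F G - z F G0 * y G \<noteq> 0" using Dw by simp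
      show cG: "card G = k"
      proof (rule ccontr)
        assume "card G \<noteq> k"
        then have "z F G = 0" "y G = 0" using top kG ysupp by fastforce+
        then show False using nz2 by simp
      qed
      show "G \<noteq> G0" using nz2 y0 by auto
      show "\<exists>F'. z F' G \<noteq> 0"
      proof (rule ccontr)
        assume "\<not> (\<exists>F'. z F' G \<noteq> 0)"
        then have "z F G = 0" "y G = 0" unfolding y_def by auto
        then show False using nz2 by simp
      qed
    qed
  qed
qed



definition lev :: "'a set \<Rightarrow> ('a set \<Rightarrow> 'a set \<Rightarrow> 'k::zero) \<Rightarrow> nat \<Rightarrow> 'a set set" where
  "lev B z k = {G. G \<subseteq> B \<and> card G = k \<and> (\<exists>F. z F G \<noteq> 0)}"

definition isbd :: "('a::linorder \<Rightarrow> 'a \<Rightarrow> bool) \<Rightarrow> 'a set \<Rightarrow> 'a set \<Rightarrow> nat \<Rightarrow> ('a set \<Rightarrow> 'a set \<Rightarrow> 'k::field) \<Rightarrow> bool" where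
  "isbd E A B n z \<longleftrightarrow> (\<exists>c. bichain E A B (Suc n) c \<and> (\<forall>F G. Dop A B c F G = z F G))"

lemma lev_finite: "finite B \<Longrightarrow> finite (lev B z k)"
  unfolding lev_def by (rule finite_subset[of _ "Pow B"]) auto

lemma UB_step:
  fixes E :: "'a::linorder \<Rightarrow> 'a \<Rightarrow> bool" and z :: "'a set \<Rightarrow> 'a set \<Rightarrow> 'k::field"
  assumes fA: "finite A" and fB: "finite B"
    and np: "\<not> (\<exists>p q. p + q = n \<and> hom_nz TYPE('k) E A p \<and> hom_nz TYPE('k) E B q)"
    and prev: "\<forall>z :: 'a set \<Rightarrow> 'a set \<Rightarrow> 'k. bichain E A B n z \<and> (\<forall>F G. Dop A B z F G = 0) \<and>
      (\<forall>F G. z F G \<noteq> 0 \<longrightarrow> card G < k) \<longrightarrow> isbd E A B n z"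
  shows "bichain E A B n z \<and> (\<forall>F G. Dop A B z F G = 0) \<and>
      (\<forall>F G. z F G \<noteq> 0 \<longrightarrow> card G \<le> k) \<and> card (lev B z k) \<le> m \<longrightarrow> isbd E A B n z"
proof (induction m arbitrary: z)
  case 0
  show ?case
  proof (intro impI)
    assume h: "bichain E A B n z \<and> (\<forall>F G. Dop A B z F G = 0) \<and> (\<forall>F G. z F G \<noteq> 0 \<longrightarrow> card G \<le> k) \<and> card (lev B z k) \<le> 0"
    then have "card (lev B z k) = 0" by simp
    then have "lev B z k = {}" using card_0_eq[OF lev_finite[OF fB]] by blast
    note le = this
    have "\<forall>F G. z F G \<noteq> 0 \<longrightarrow> card G < k"
    proof (intro allI impI)
      fix F G assume nz: "z F G \<noteq> 0"
      then have "card G \<le> k" using h by blast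
      moreover have "G \<subseteq> B" using nz h unfolding bichain_def ind_face_def by blast
      ultimately have "card G \<noteq> k \<Longrightarrow> card G < k" by simp
      moreover have "card G = k \<Longrightarrow> G \<in> lev B z k" using nz \<open>G \<subseteq> B\<close> unfolding lev_def by blast
      ultimately show "card G < k" using le by blast
    qed
    then show "isbd E A B n z" using prev h by blast
  qed
next
  case (Suc m)
  show ?case
  proof (intro impI)
    assume h: "bichain E A B n z \<and> (\<forall>F G. Dop A B z F G = 0) \<and> (\<forall>F G. z F G \<noteq> 0 \<longrightarrow> card G \<le> k) \<and> card (lev B z k) \<le> Suc m"
    then have zb: "bichain E A B n z" and zc: "\<forall>F G. Dop A B z F G = 0"
      and top: "\<forall>F G. z F G \<noteq> 0 \<longrightarrow> card G \<le> k" and cl: "card (lev B z k) \<le> Suc m" by auto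
    show "isbd E A B n z"
    proof (cases "card (lev B z k) \<le> m")
      case True then show ?thesis using Suc.IH h by blast
    next
      case False
      then have "lev B z k \<noteq> {}" by auto
      then obtain G0 where G0: "G0 \<in> lev B z k" by blast
      then obtain F0 where F0: "z F0 G0 \<noteq> 0" and cG0: "card G0 = k" unfolding lev_def by blast
      obtain w where w: "bichain E A B (Suc n) w"
        "\<forall>F G. k \<le> card G \<longrightarrow> z F G - Dop A B w F G \<noteq> 0 \<longrightarrow> card G = k \<and> G \<noteq> G0 \<and> (\<exists>F'. z F' G \<noteq> 0)"
        using elim[OF fA fB np zb zc top cG0 F0] by blast
      define z' where "z' = (\<lambda>F G. z F G - Dop A B w F G)"
      have z'b: "bichain E A B n z'" unfolding z'_def
        by (rule bichain_diff[OF zb Dop_bichain[OF w(1) fA fB]])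
      have z'c: "\<forall>F G. Dop A B z' F G = 0"
      proof (intro allI)
        fix F G
        have "Dop A B z' F G = Dop A B z F G - Dop A B (Dop A B w) F G" unfolding z'_def by (rule Dop_diff)
        then show "Dop A B z' F G = 0" using zc Dop_Dop[OF fA fB bichain_fin[OF w(1) fA fB]] by simp
      qed
      have z't: "\<forall>F G. z' F G \<noteq> 0 \<longrightarrow> card G \<le> k"
      proof (intro allI impI)
        fix F G assume nz: "z' F G \<noteq> 0"
        show "card G \<le> k"
        proof (rule ccontr)
          assume "\<not> card G \<le> k"
          then have "k \<le> card G" "card G \<noteq> k" by auto
          then show False using w(2) nz unfolding z'_def by blast
        qed
      qed
      have sub: "lev B z' k \<subseteq> lev B z k - {G0}"
      proof
        fix G assume G: "G \<in> lev B z' k"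
        then obtain F where "z' F G \<noteq> 0" "card G = k" "G \<subseteq> B" unfolding lev_def by blast
        then have "G \<noteq> G0 \<and> (\<exists>F'. z F' G \<noteq> 0)" using w(2) unfolding z'_def by auto
        then show "G \<in> lev B z k - {G0}" using \<open>card G = k\<close> \<open>G \<subseteq> B\<close> unfolding lev_def by auto
      qed
      have "card (lev B z' k) \<le> card (lev B z k - {G0})"
        by (rule card_mono[OF _ sub]) (use lev_finite[OF fB] in auto)
      also have "\<dots> = card (lev B z k) - 1" using G0 lev_finite[OF fB] by simp
      finally have "card (lev B z' k) \<le> m" using cl by simp
      then have "isbd E A B n z'" using Suc.IH z'b z'c z't by blast
      then obtain c' where c': "bichain E A B (Suc n) c'" "\<forall>F G. Dop A B c' F G = z' F G"
        unfolding isbd_def by blast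
      show ?thesis
        unfolding isbd_def
      proof (intro exI conjI allI)
        show "bichain E A B (Suc n) (\<lambda>F G. c' F G + w F G)" by (rule bichain_add[OF c'(1) w(1)])
        fix F G
        show "Dop A B (\<lambda>F G. c' F G + w F G) F G = z F G"
          unfolding Dop_add using c'(2) unfolding z'_def by simp
      qed
    qed
  qed
qed

lemma UB_all:
  fixes E :: "'a::linorder \<Rightarrow> 'a \<Rightarrow> bool"
  assumes fA: "finite A" and fB: "finite B"
    and np: "\<not> (\<exists>p q. p + q = n \<and> hom_nz TYPE('k::field) E A p \<and> hom_nz TYPE('k) E B q)"
  shows "\<forall>z :: 'a set \<Rightarrow> 'a set \<Rightarrow> 'k. bichain E A B n z \<and> (\<forall>F G. Dop A B z F G = 0) \<and>
      (\<forall>F G. z F G \<noteq> 0 \<longrightarrow> card G < k) \<longrightarrow> isbd E A B n z"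
proof (induction k)
  case 0
  show ?case
  proof (intro allI impI)
    fix z :: "'a set \<Rightarrow> 'a set \<Rightarrow> 'k"
    assume "bichain E A B n z \<and> (\<forall>F G. Dop A B z F G = 0) \<and> (\<forall>F G. z F G \<noteq> 0 \<longrightarrow> card G < 0)"
    then have "z = (\<lambda>F G. 0)" by (auto intro!: ext)
    moreover have "bichain E A B (Suc n) (\<lambda>F G. 0::'k)" unfolding bichain_def by simp
    ultimately show "isbd E A B n z" unfolding isbd_def using Dop_zero by blast
  qed
next
  case (Suc k)
  show ?case
  proof (intro allI impI)
    fix z :: "'a set \<Rightarrow> 'a set \<Rightarrow> 'k"
    assume h: "bichain E A B n z \<and> (\<forall>F G. Dop A B z F G = 0) \<and> (\<forall>F G. z F G \<noteq> 0 \<longrightarrow> card G < Suc k)"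
    have "\<forall>F G. z F G \<noteq> 0 \<longrightarrow> card G \<le> k"
    proof (intro allI impI)
      fix F G assume "z F G \<noteq> 0"
      then have "card G < Suc k" using h by blast
      then show "card G \<le> k" by simp
    qed
    then show "isbd E A B n z"
      using UB_step[OF fA fB np Suc.IH, of z "card (lev B z k)"] h by blast
  qed
qed

lemma UB_bi:
  fixes E :: "'a::linorder \<Rightarrow> 'a \<Rightarrow> bool" and z :: "'a set \<Rightarrow> 'a set \<Rightarrow> 'k::field"
  assumes fA: "finite A" and fB: "finite B"
    and zb: "bichain E A B n z" and zc: "\<forall>F G. Dop A B z F G = 0"
    and nb: "\<not> isbd E A B n z"
  shows "\<exists>p q. p + q = n \<and> hom_nz TYPE('k) E A p \<and> hom_nz TYPE('k) E B q"
proof (rule ccontr)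
  assume np: "\<not> (\<exists>p q. p + q = n \<and> hom_nz TYPE('k) E A p \<and> hom_nz TYPE('k) E B q)"
  have "\<forall>F G. z F G \<noteq> 0 \<longrightarrow> card G < Suc n"
  proof (intro allI impI)
    fix F G assume "z F G \<noteq> 0"
    then have "card F + card G = n" using zb unfolding bichain_def by blast
    then show "card G < Suc n" by simp
  qed
  then show False using UB_all[OF fA fB np, of "Suc n"] zb zc nb by blast
qed



lemma nocross_mono: "nocross E A B \<Longrightarrow> A' \<subseteq> A \<Longrightarrow> B' \<subseteq> B \<Longrightarrow> nocross E A' B'"
  unfolding nocross_def by blast

lemma hom_split:
  fixes E :: "'a::linorder \<Rightarrow> 'a \<Rightarrow> bool"
  assumes "A \<inter> B = {}" "finite A" "finite B" "nocross E A B" "hom_nz TYPE('k::field) E (A \<union> B) n"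
  shows "\<exists>p q. p + q = n \<and> hom_nz TYPE('k) E A p \<and> hom_nz TYPE('k) E B q"
proof -
  obtain z2 :: "'a set \<Rightarrow> 'a set \<Rightarrow> 'k" where z2: "bichain E A B n z2" "\<forall>F G. Dop A B z2 F G = 0"
    "\<not> (\<exists>c2. bichain E A B (Suc n) c2 \<and> (\<forall>F G. Dop A B c2 F G = z2 F G))"
    using hom_to_bi[OF assms] by blast
  show ?thesis by (rule UB_bi[OF assms(2,3) z2(1,2)]) (use z2(3) in \<open>simp add: isbd_def\<close>)
qed

lemma hom_join:
  fixes E :: "'a::linorder \<Rightarrow> 'a \<Rightarrow> bool"
  assumes "A \<inter> B = {}" "finite A" "finite B" "nocross E A B"
    "hom_nz TYPE('k::field) E A p" "hom_nz TYPE('k) E B q"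
  shows "hom_nz TYPE('k) E (A \<union> B) (p + q)"
proof -
  obtain z :: "'a set \<Rightarrow> 'a set \<Rightarrow> 'k" where z: "bichain E A B (p + q) z" "\<forall>F G. Dop A B z F G = 0"
    "\<not> (\<exists>c. bichain E A B (Suc (p + q)) c \<and> (\<forall>F G. Dop A B c F G = z F G))"
    using LB_bi[OF assms(2,3,5,6)] by blast
  show ?thesis by (rule bi_to_hom[OF assms(1-4) z])
qed

lemma hom_le_card:
  fixes E :: "'a::linorder \<Rightarrow> 'a \<Rightarrow> bool"
  assumes "finite S" "hom_nz TYPE('k::field) E S j"
  shows "j \<le> card S"
proof -
  obtain z :: "'a set \<Rightarrow> 'k" where z: "is_chain E S j z" "\<not> (\<exists>c. is_chain E S (Suc j) c \<and> (\<forall>\<tau>. bd S c \<tau> = z \<tau>))"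
    using assms(2) unfolding hom_nz_def by blast
  have "\<exists>F. z F \<noteq> 0"
  proof (rule ccontr)
    assume "\<not> (\<exists>F. z F \<noteq> 0)"
    then have "\<forall>\<tau>. bd S (\<lambda>F. 0) \<tau> = z \<tau>" by (simp add: bd_zero)
    moreover have "is_chain E S (Suc j) (\<lambda>F. 0)" by (rule is_chain_zero)
    ultimately show False using z(2) by blast
  qed
  then obtain F where "z F \<noteq> 0" by blast
  then have "F \<subseteq> S" "card F = j" using z(1) unfolding is_chain_def ind_face_def by auto
  then show ?thesis using assms(1) card_mono by blast
qed

lemma hom_empty: "hom_nz TYPE('k::field) E {} 0"
  unfolding hom_nz_def
proof (intro exI conjI allI)
  define z :: "'a set \<Rightarrow> 'k" where "z = (\<lambda>F. if F = {} then 1 else 0)"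
  show "is_chain E {} 0 z" unfolding is_chain_def z_def ind_face_def by auto
  fix \<tau> show "bd {} z \<tau> = 0" unfolding bd_def by simp
next
  show "\<not> (\<exists>c. is_chain E {} (Suc 0) c \<and> (\<forall>\<tau>. bd {} c \<tau> = (if \<tau> = {} then 1 else (0::'k))))"
  proof
    assume "\<exists>c. is_chain E {} (Suc 0) c \<and> (\<forall>\<tau>. bd {} c \<tau> = (if \<tau> = {} then 1 else (0::'k)))"
    then obtain c :: "'a set \<Rightarrow> 'k" where "\<forall>\<tau>. bd {} c \<tau> = (if \<tau> = {} then 1 else 0)" by blast
    then have "bd {} c {} = 1" by auto
    then show False unfolding bd_def by simp
  qed
qed

lemma reg_facts:
  fixes E :: "'a::linorder \<Rightarrow> 'a \<Rightarrow> bool"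
  assumes "finite V"
  shows "\<exists>S\<subseteq>V. hom_nz TYPE('k::field) E S (reg TYPE('k) E V)"
    and "\<And>S j. S \<subseteq> V \<Longrightarrow> hom_nz TYPE('k) E S j \<Longrightarrow> j \<le> reg TYPE('k) E V"
proof -
  define R where "R = {j. \<exists>S\<subseteq>V. hom_nz TYPE('k) E S j}"
  have fin: "finite R"
  proof (rule finite_subset[of _ "{..card V}"])
    show "R \<subseteq> {..card V}"
    proof
      fix j assume "j \<in> R"
      then obtain S where "S \<subseteq> V" "hom_nz TYPE('k) E S j" unfolding R_def by blast
      then have "j \<le> card S" using hom_le_card assms finite_subset by blast
      also have "\<dots> \<le> card V" using \<open>S \<subseteq> V\<close> assms card_mono by blast
      finally show "j \<in> {..card V}" by simp
    qed
  qed simp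
  have "0 \<in> R" unfolding R_def using hom_empty by blast
  then have ne: "R \<noteq> {}" by blast
  have rd: "reg TYPE('k) E V = Max R" unfolding reg_def R_def ..
  show "\<exists>S\<subseteq>V. hom_nz TYPE('k) E S (reg TYPE('k) E V)"
    using Max_in[OF fin ne] unfolding rd R_def by blast
  show "\<And>S j. S \<subseteq> V \<Longrightarrow> hom_nz TYPE('k) E S j \<Longrightarrow> j \<le> reg TYPE('k) E V"
  proof -
    fix S j assume "S \<subseteq> V" "hom_nz TYPE('k) E S j"
    then have "j \<in> R" unfolding R_def by blast
    then show "j \<le> reg TYPE('k) E V" unfolding rd using Max_ge[OF fin] by blast
  qed
qed

lemma reg_mono:
  fixes E :: "'a::linorder \<Rightarrow> 'a \<Rightarrow> bool"
  assumes "finite V" "T \<subseteq> V"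
  shows "reg TYPE('k::field) E T \<le> reg TYPE('k) E V"
proof -
  obtain S where "S \<subseteq> T" "hom_nz TYPE('k) E S (reg TYPE('k) E T)"
    using reg_facts(1)[OF finite_subset[OF assms(2,1)]] by blast
  then show ?thesis using reg_facts(2)[OF assms(1)] assms(2) by blast
qed

lemma reg_empty: "reg TYPE('k::field) (E :: 'a::linorder \<Rightarrow> 'a \<Rightarrow> bool) {} = 0"
proof -
  obtain S where "S \<subseteq> {}" "hom_nz TYPE('k) E S (reg TYPE('k) E {})" using reg_facts(1)[of "{}"] by blast
  then show ?thesis using hom_le_card[of S] by auto
qed

lemma reg_add:
  fixes E :: "'a::linorder \<Rightarrow> 'a \<Rightarrow> bool"
  assumes dj: "A \<inter> B = {}" and fA: "finite A" and fB: "finite B" and nc: "nocross E A B"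
  shows "reg TYPE('k::field) E (A \<union> B) = reg TYPE('k) E A + reg TYPE('k) E B"
proof (rule antisym)
  obtain S where S: "S \<subseteq> A \<union> B" "hom_nz TYPE('k) E S (reg TYPE('k) E (A \<union> B))"
    using reg_facts(1)[of "A \<union> B"] fA fB by blast
  have e: "S = (S \<inter> A) \<union> (S \<inter> B)" using S(1) by auto
  have "hom_nz TYPE('k) E ((S \<inter> A) \<union> (S \<inter> B)) (reg TYPE('k) E (A \<union> B))" using S(2) e by simp
  then obtain p q where pq: "p + q = reg TYPE('k) E (A \<union> B)" "hom_nz TYPE('k) E (S \<inter> A) p" "hom_nz TYPE('k) E (S \<inter> B) q"
    using hom_split[of "S \<inter> A" "S \<inter> B" E] dj fA fB nocross_mono[OF nc] by blast
  have "p \<le> reg TYPE('k) E A" using reg_facts(2)[OF fA] pq(2) by blast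
  moreover have "q \<le> reg TYPE('k) E B" using reg_facts(2)[OF fB] pq(3) by blast
  ultimately show "reg TYPE('k) E (A \<union> B) \<le> reg TYPE('k) E A + reg TYPE('k) E B" using pq(1) by simp
next
  obtain S1 where S1: "S1 \<subseteq> A" "hom_nz TYPE('k) E S1 (reg TYPE('k) E A)" using reg_facts(1)[OF fA] by blast
  obtain S2 where S2: "S2 \<subseteq> B" "hom_nz TYPE('k) E S2 (reg TYPE('k) E B)" using reg_facts(1)[OF fB] by blast
  have "hom_nz TYPE('k) E (S1 \<union> S2) (reg TYPE('k) E A + reg TYPE('k) E B)"
    by (rule hom_join) (use S1 S2 dj fA fB nocross_mono[OF nc S1(1) S2(1)] finite_subset in auto)
  moreover have "S1 \<union> S2 \<subseteq> A \<union> B" using S1 S2 by auto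
  ultimately show "reg TYPE('k) E A + reg TYPE('k) E B \<le> reg TYPE('k) E (A \<union> B)"
    using reg_facts(2)[of "A \<union> B"] fA fB by blast
qed



lemma sum_reg:
  fixes E :: "'a::linorder \<Rightarrow> 'a \<Rightarrow> bool"
  assumes "finite H" "\<forall>W\<in>H. finite W"
    "\<forall>W1\<in>H. \<forall>W2\<in>H. W1 \<noteq> W2 \<longrightarrow> W1 \<inter> W2 = {} \<and> (\<forall>u\<in>W1. \<forall>v\<in>W2. \<not> E u v)"
  shows "reg TYPE('k::field) E (\<Union>H) = (\<Sum>W\<in>H. reg TYPE('k) E W)"
  using assms
proof (induction H rule: finite_induct)
  case empty
  show ?case unfolding Union_empty sum.empty by (rule reg_empty)
next
  case (insert W H)
  have pw: "W \<inter> W' = {} \<and> (\<forall>u\<in>W. \<forall>v\<in>W'. \<not> E u v) \<and> (\<forall>u\<in>W'. \<forall>v\<in>W. \<not> E u v)" if W': "W' \<in> H" for W'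
  proof -
    have ne: "W \<noteq> W'" using W' insert.hyps(2) by blast
    have "W \<inter> W' = {} \<and> (\<forall>u\<in>W. \<forall>v\<in>W'. \<not> E u v)" using insert.prems(2)[rule_format, of W W'] W' ne by simp
    moreover have "W' \<inter> W = {} \<and> (\<forall>u\<in>W'. \<forall>v\<in>W. \<not> E u v)" using insert.prems(2)[rule_format, of W' W] W' ne by simp
    ultimately show ?thesis by blast
  qed
  have dj: "W \<inter> \<Union>H = {}" using pw by blast
  have nc: "nocross E W (\<Union>H)"
    unfolding nocross_def
  proof (intro ballI conjI)
    fix u v assume u: "u \<in> W" and v: "v \<in> \<Union>H"
    then obtain W' where W': "W' \<in> H" "v \<in> W'" by blast
    then show "\<not> E u v" "\<not> E v u" using pw[OF W'(1)] W'(2) u by blast+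
  qed
  have fW: "finite W" and fH: "finite (\<Union>H)" using insert.prems(1) insert.hyps(1) by auto
  have "reg TYPE('k) E (\<Union>(insert W H)) = reg TYPE('k) E (W \<union> \<Union>H)" by simp
  also have "\<dots> = reg TYPE('k) E W + reg TYPE('k) E (\<Union>H)" by (rule reg_add[OF dj fW fH nc])
  also have "reg TYPE('k) E (\<Union>H) = (\<Sum>W\<in>H. reg TYPE('k) E W)"
    using insert.IH insert.prems by blast
  finally show ?case using insert.hyps by simp
qed

lemma dec:
  fixes E :: "'a::linorder \<Rightarrow> 'a \<Rightarrow> bool"
  assumes symE: "\<forall>u v. E u v \<longrightarrow> E v u"
  shows "finite S \<Longrightarrow> (\<forall>x\<in>S. reg TYPE('k::field) E (S - {x}) < reg TYPE('k) E S) \<Longrightarrow>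
    \<exists>H. (\<forall>W\<in>H. W \<subseteq> S \<and> prime_graph TYPE('k) E W) \<and>
      (\<forall>W1\<in>H. \<forall>W2\<in>H. W1 \<noteq> W2 \<longrightarrow> W1 \<inter> W2 = {} \<and> (\<forall>u\<in>W1. \<forall>v\<in>W2. \<not> E u v)) \<and>
      (\<Sum>W\<in>H. reg TYPE('k) E W) = reg TYPE('k) E S"
proof (induction "card S" arbitrary: S rule: less_induct)
  case less
  note fS = less.prems(1) and crit = less.prems(2)
  show ?case
  proof (cases "S = {}")
    case True
    have "reg TYPE('k) E S = 0" unfolding True by (rule reg_empty)
    then show ?thesis by (intro exI[of _ "{}"]) auto
  next
    case Sne: False
    show ?thesis
    proof (cases "connected_graph E S")
      case True
      then have "prime_graph TYPE('k) E S" unfolding prime_graph_def using crit by blast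
      then show ?thesis by (intro exI[of _ "{S}"]) auto
    next
      case False
      define R where "R = (\<lambda>x y. x \<in> S \<and> y \<in> S \<and> E x y)"
      obtain u v where uv: "u \<in> S" "v \<in> S" "\<not> R\<^sup>*\<^sup>* u v"
        using False Sne unfolding connected_graph_def R_def by blast
      define A where "A = {w\<in>S. R\<^sup>*\<^sup>* u w}"
      define B where "B = S - A"
      have uA: "u \<in> A" unfolding A_def using uv by auto
      have vB: "v \<in> B" unfolding A_def B_def using uv by auto
      have dj: "A \<inter> B = {}" and SAB: "S = A \<union> B" unfolding B_def A_def by auto
      have fA: "finite A" and fB: "finite B" using fS unfolding A_def B_def by auto
      have nc: "nocross E A B"
        unfolding nocross_def
      proof (intro ballI conjI)
        fix a b assume a: "a \<in> A" and b: "b \<in> B"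
        have ab: "\<not> E a b"
        proof
          assume "E a b"
          then have h2: "R a b" using a b unfolding R_def A_def B_def by auto
          have h1: "R\<^sup>*\<^sup>* u a" using a unfolding A_def by auto
          have "R\<^sup>*\<^sup>* u b" by (rule rtranclp.rtrancl_into_rtrancl[OF h1 h2])
          then show False using b unfolding A_def B_def by auto
        qed
        then show "\<not> E a b" .
        show "\<not> E b a" using ab symE by blast
      qed
      have "A \<subset> S" using vB uv(2) unfolding A_def B_def by blast
      then have cA: "card A < card S" by (rule psubset_card_mono[OF fS])
      have "B \<subset> S" using uA uv(1) unfolding A_def B_def by blast
      then have cB: "card B < card S" by (rule psubset_card_mono[OF fS])
      have regS: "reg TYPE('k) E S = reg TYPE('k) E A + reg TYPE('k) E B" unfolding SAB by (rule reg_add[OF dj fA fB nc])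
      have critA: "\<forall>x\<in>A. reg TYPE('k) E (A - {x}) < reg TYPE('k) E A"
      proof
        fix x assume x: "x \<in> A"
        have "S - {x} = (A - {x}) \<union> B" using x SAB dj by auto
        then have "reg TYPE('k) E (S - {x}) = reg TYPE('k) E (A - {x}) + reg TYPE('k) E B"
          using reg_add[of "A - {x}" B] dj fA fB nocross_mono[OF nc, of "A - {x}" B] by auto
        moreover have "reg TYPE('k) E (S - {x}) < reg TYPE('k) E S" using crit x SAB by blast
        ultimately show "reg TYPE('k) E (A - {x}) < reg TYPE('k) E A" using regS by simp
      qed
      have critB: "\<forall>x\<in>B. reg TYPE('k) E (B - {x}) < reg TYPE('k) E B"
      proof
        fix x assume x: "x \<in> B"
        have "S - {x} = A \<union> (B - {x})" using x SAB dj by auto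
        then have "reg TYPE('k) E (S - {x}) = reg TYPE('k) E A + reg TYPE('k) E (B - {x})"
          using reg_add[of A "B - {x}"] dj fA fB nocross_mono[OF nc, of A "B - {x}"] by auto
        moreover have "reg TYPE('k) E (S - {x}) < reg TYPE('k) E S" using crit x SAB by blast
        ultimately show "reg TYPE('k) E (B - {x}) < reg TYPE('k) E B" using regS by simp
      qed
      obtain HA where HA0: "(\<forall>W\<in>HA. W \<subseteq> A \<and> prime_graph TYPE('k) E W) \<and>
        (\<forall>W1\<in>HA. \<forall>W2\<in>HA. W1 \<noteq> W2 \<longrightarrow> W1 \<inter> W2 = {} \<and> (\<forall>u\<in>W1. \<forall>v\<in>W2. \<not> E u v)) \<and>
        (\<Sum>W\<in>HA. reg TYPE('k) E W) = reg TYPE('k) E A"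
        using less.hyps[OF cA fA critA] by (rule exE)
      note HA = HA0[THEN conjunct1] HA0[THEN conjunct2, THEN conjunct1] HA0[THEN conjunct2, THEN conjunct2]
      obtain HB where HB0: "(\<forall>W\<in>HB. W \<subseteq> B \<and> prime_graph TYPE('k) E W) \<and>
        (\<forall>W1\<in>HB. \<forall>W2\<in>HB. W1 \<noteq> W2 \<longrightarrow> W1 \<inter> W2 = {} \<and> (\<forall>u\<in>W1. \<forall>v\<in>W2. \<not> E u v)) \<and>
        (\<Sum>W\<in>HB. reg TYPE('k) E W) = reg TYPE('k) E B"
        using less.hyps[OF cB fB critB] by (rule exE)
      note HB = HB0[THEN conjunct1] HB0[THEN conjunct2, THEN conjunct1] HB0[THEN conjunct2, THEN conjunct2]
      have "HA \<subseteq> Pow A" using HA(1) by blast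
      then have fHA: "finite HA" using fA by (simp add: finite_subset)
      have "HB \<subseteq> Pow B" using HB(1) by blast
      then have fHB: "finite HB" using fB by (simp add: finite_subset)
      have djH: "HA \<inter> HB = {}"
      proof (rule ccontr)
        assume "HA \<inter> HB \<noteq> {}"
        then obtain W where W: "W \<in> HA" "W \<in> HB" by blast
        then have "W \<subseteq> A" "W \<subseteq> B" "prime_graph TYPE('k) E W" using HA(1) HB(1) by auto
        then show False using dj unfolding prime_graph_def connected_graph_def by auto
      qed
      show ?thesis
      proof (intro exI[of _ "HA \<union> HB"] conjI)
        show "\<forall>W\<in>HA \<union> HB. W \<subseteq> S \<and> prime_graph TYPE('k) E W" using HA(1) HB(1) SAB by blast
        show "\<forall>W1\<in>HA \<union> HB. \<forall>W2\<in>HA \<union> HB. W1 \<noteq> W2 \<longrightarrow> W1 \<inter> W2 = {} \<and> (\<forall>u\<in>W1. \<forall>v\<in>W2. \<not> E u v)"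
        proof (intro ballI impI)
          fix W1 W2 assume W: "W1 \<in> HA \<union> HB" "W2 \<in> HA \<union> HB" "W1 \<noteq> W2"
          show "W1 \<inter> W2 = {} \<and> (\<forall>u\<in>W1. \<forall>v\<in>W2. \<not> E u v)"
          proof (cases "W1 \<in> HA")
            case True
            show ?thesis
            proof (cases "W2 \<in> HA")
              case True then show ?thesis using \<open>W1 \<in> HA\<close> W(3) HA(2) by blast
            next
              case False
              then have "W2 \<in> HB" using W by blast
              then have "W1 \<subseteq> A" "W2 \<subseteq> B" using \<open>W1 \<in> HA\<close> HA(1) HB(1) by auto
              then show ?thesis using dj nc unfolding nocross_def by blast
            qed
          next
            case False
            then have W1B: "W1 \<in> HB" using W by blast
            show ?thesis
            proof (cases "W2 \<in> HB")
              case True then show ?thesis using W1B W(3) HB(2) by blast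
            next
              case False
              then have "W2 \<in> HA" using W by blast
              then have "W1 \<subseteq> B" "W2 \<subseteq> A" using W1B HA(1) HB(1) by auto
              then show ?thesis using dj nc unfolding nocross_def by blast
            qed
          qed
        qed
        show "(\<Sum>W\<in>HA \<union> HB. reg TYPE('k) E W) = reg TYPE('k) E S"
          using sum.union_disjoint[OF fHA fHB djH, of "reg TYPE('k) E"] HA(3) HB(3) regS by simp
      qed
    qed
  qed
qed

theorem theorem1p1:
  fixes E :: "'a::linorder \<Rightarrow> 'a \<Rightarrow> bool" and V :: "'a set"
  assumes "finite V"
    and "\<And>u v. E u v \<Longrightarrow> E v u"
    and "\<And>v. \<not> E v v"
  shows "reg TYPE('k::field) E V =
    Max {(\<Sum>W\<in>\<H>. reg TYPE('k) E W) | \<H>. prime_decomp TYPE('k) E V \<H>}"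
proof -
  define M where "M = {(\<Sum>W\<in>\<H>. reg TYPE('k) E W) | \<H>. prime_decomp TYPE('k) E V \<H>}"
  have sub: "\<H> \<subseteq> Pow V" if "prime_decomp TYPE('k) E V \<H>" for \<H>
    using that unfolding prime_decomp_def by auto
  have finM: "finite M"
  proof (rule finite_subset)
    show "M \<subseteq> (\<lambda>\<H>. \<Sum>W\<in>\<H>. reg TYPE('k) E W) ` Pow (Pow V)" unfolding M_def using sub by blast
    show "finite ((\<lambda>\<H>. \<Sum>W\<in>\<H>. reg TYPE('k) E W) ` Pow (Pow V))" using assms(1) by simp
  qed
  have upper: "x \<le> reg TYPE('k) E V" if xM: "x \<in> M" for x
  proof -
    obtain \<H> where H: "x = (\<Sum>W\<in>\<H>. reg TYPE('k) E W)" "prime_decomp TYPE('k) E V \<H>"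
      using xM unfolding M_def by blast
    have fH: "finite \<H>" using sub[OF H(2)] assms(1) by (meson finite_Pow_iff finite_subset)
    have fW: "\<forall>W\<in>\<H>. finite W" using sub[OF H(2)] assms(1) finite_subset by blast
    have pw: "\<forall>W1\<in>\<H>. \<forall>W2\<in>\<H>. W1 \<noteq> W2 \<longrightarrow> W1 \<inter> W2 = {} \<and> (\<forall>u\<in>W1. \<forall>v\<in>W2. \<not> E u v)"
      using H(2) unfolding prime_decomp_def by (rule conjunct2)
    have "x = reg TYPE('k) E (\<Union>\<H>)" using sum_reg[where 'k='k, OF fH fW pw] H(1) by simp
    also have "\<dots> \<le> reg TYPE('k) E V" by (rule reg_mono[OF assms(1)]) (use sub[OF H(2)] in blast)
    finally show ?thesis .
  qed
  obtain S where S: "S \<subseteq> V \<and> reg TYPE('k) E S = reg TYPE('k) E V"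
    "\<forall>T. T \<subseteq> V \<and> reg TYPE('k) E T = reg TYPE('k) E V \<longrightarrow> card S \<le> card T"
    using ex_has_least_nat[of "\<lambda>T. T \<subseteq> V \<and> reg TYPE('k) E T = reg TYPE('k) E V" V card] by blast
  have fS: "finite S" using S(1) assms(1) finite_subset by blast
  have symE: "\<forall>u v. E u v \<longrightarrow> E v u" using assms(2) by blast
  have crit: "\<forall>x\<in>S. reg TYPE('k) E (S - {x}) < reg TYPE('k) E S"
  proof
    fix x assume x: "x \<in> S"
    have le: "reg TYPE('k) E (S - {x}) \<le> reg TYPE('k) E S" by (rule reg_mono[OF fS]) blast
    have "reg TYPE('k) E (S - {x}) \<noteq> reg TYPE('k) E S"
    proof
      assume "reg TYPE('k) E (S - {x}) = reg TYPE('k) E S"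
      then have "S - {x} \<subseteq> V \<and> reg TYPE('k) E (S - {x}) = reg TYPE('k) E V" using S(1) by auto
      then have "card S \<le> card (S - {x})" using S(2) by blast
      moreover have "card (S - {x}) < card S" by (rule card_Diff1_less[OF fS x])
      ultimately show False by simp
    qed
    then show "reg TYPE('k) E (S - {x}) < reg TYPE('k) E S" using le by simp
  qed
  obtain \<H> where H: "\<forall>W\<in>\<H>. W \<subseteq> S \<and> prime_graph TYPE('k) E W"
    "\<forall>W1\<in>\<H>. \<forall>W2\<in>\<H>. W1 \<noteq> W2 \<longrightarrow> W1 \<inter> W2 = {} \<and> (\<forall>u\<in>W1. \<forall>v\<in>W2. \<not> E u v)"
    "(\<Sum>W\<in>\<H>. reg TYPE('k) E W) = reg TYPE('k) E S"
    using dec[OF symE fS crit] by (elim exE conjE) blast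
  have "prime_decomp TYPE('k) E V \<H>" unfolding prime_decomp_def using H(1,2) S(1) by blast
  moreover have "reg TYPE('k) E V = (\<Sum>W\<in>\<H>. reg TYPE('k) E W)" using H(3) S(1) by simp
  ultimately have inM: "reg TYPE('k) E V \<in> M" unfolding M_def by blast
  have "Max M = reg TYPE('k) E V" by (rule Max_eqI[OF finM upper inM])
  then show ?thesis unfolding M_def by simp
qed


end
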